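(* Let $p=p(n)$ with $p/n\to y\in(0,\infty)$, and let $L=L_T$, $L(i,j)=i-j$. Let $\omega$ be a word of length $2k$ with $b$ distinct letters and $r+1$ even generating vertices. Then the limit $\lim_{n\to\infty}|\Pi_{S_T}(\omega)|/(p^{r+1}n^{b-r})$ exists, and it is strictly positive if and only if $\omega$ is a symmetric word (otherwise it equals $0$).
   Context: Words: a word of length $m$ is a sequence of letters whose distinct letters first appear in alphabetical order. A word is symmetric if each distinct letter appears the same number of times in odd positions as in even positions. Circuits for $S_A$ with link function $L$: maps $\pi:\{0,\dots,2k\}\to\mathbb N$ with $\pi(0)=\pi(2k)$, $1\le\pi(2i)\le p$, $1\le\pi(2i-1)\le n$; $\xi_\pi(2i-1)=L(\pi(2i-2),\pi(2i-1))$, $\xi_\pi(2i)=L(\pi(2i),\pi(2i-1))$. For a word $\omega$ of length $2k$, $\Pi_{S_A}(\omega)=\{\pi:\ \omega[i]=\omega[j]\iff\xi_\pi(i)=\xi_\pi(j)\ \forall i,j\}$. The vertex $\pi(i)$ is generating if $i=0$ or $\omega[i]$ is the first occurrence of its letter; it is even if $i$ is even. *)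

theory Defs
  imports Complex_Main
begin

text \<open>Words are lists of natural-number letters; position i (1-indexed, 1 \<le> i \<le> length w)
  carries the letter w!(i-1). A word is one whose distinct letters first appear in the
  order 0, 1, 2, ... (restricted growth condition).\<close>

definition is_word :: "nat list \<Rightarrow> bool" where
  "is_word w \<longleftrightarrow> (\<forall>i < length w. w ! i \<le> card (set (take i w)))"

definition symmetric_word :: "nat list \<Rightarrow> bool" where
  "symmetric_word w \<longleftrightarrow>
     (\<forall>a \<in> set w. card {i \<in> {1..length w}. odd i \<and> w ! (i - 1) = a}
                 = card {i \<in> {1..length w}. even i \<and> w ! (i - 1) = a})"

text \<open>Position i (1 \<le> i \<le> length w) is generating if it is the first occurrence of its letter.\<close>
definition first_occ :: "nat list \<Rightarrow> nat \<Rightarrow> bool" where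
  "first_occ w i \<longleftrightarrow> w ! (i - 1) \<notin> set (take (i - 1) w)"

text \<open>Number of even generating vertices pi(i), i \<in> {0..2k}: vertex 0 plus even first occurrences.\<close>
definition even_generating :: "nat list \<Rightarrow> nat" where
  "even_generating w = 1 + card {i \<in> {1..length w}. even i \<and> first_occ w i}"

text \<open>Circuits pi : {0..2k} \<rightarrow> nat, represented as lists of length 2k+1.\<close>
definition circuits :: "nat \<Rightarrow> nat \<Rightarrow> nat \<Rightarrow> nat list set" where
  "circuits p n k = {\<pi>. length \<pi> = 2 * k + 1 \<and> \<pi> ! 0 = \<pi> ! (2 * k)
      \<and> (\<forall>i \<le> k. 1 \<le> \<pi> ! (2 * i) \<and> \<pi> ! (2 * i) \<le> p)
      \<and> (\<forall>i \<in> {1..k}. 1 \<le> \<pi> ! (2 * i - 1) \<and> \<pi> ! (2 * i - 1) \<le> n)}"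

definition xi :: "(nat \<Rightarrow> nat \<Rightarrow> int) \<Rightarrow> nat list \<Rightarrow> nat \<Rightarrow> int" where
  "xi L \<pi> j = (if odd j then L (\<pi> ! (j - 1)) (\<pi> ! j) else L (\<pi> ! j) (\<pi> ! (j - 1)))"

definition Pi_S :: "(nat \<Rightarrow> nat \<Rightarrow> int) \<Rightarrow> nat \<Rightarrow> nat \<Rightarrow> nat \<Rightarrow> nat list \<Rightarrow> nat list set" where
  "Pi_S L p n k w = {\<pi> \<in> circuits p n k.
      \<forall>i \<in> {1..2 * k}. \<forall>j \<in> {1..2 * k}. (w ! (i - 1) = w ! (j - 1) \<longleftrightarrow> xi L \<pi> i = xi L \<pi> j)}"

definition L_T :: "nat \<Rightarrow> nat \<Rightarrow> int" where
  "L_T i j = int i - int j"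

end

theory Submission
  imports Defs "HOL-Library.FuncSet"
begin


lemma card_int_Ico_real:
  fixes \<alpha> \<beta> :: real
  shows "card {x::int. \<alpha> \<le> real_of_int x \<and> real_of_int x < \<beta>} = nat (\<lceil>\<beta>\<rceil> - \<lceil>\<alpha>\<rceil>)"
proof -
  have "{x::int. \<alpha> \<le> real_of_int x \<and> real_of_int x < \<beta>} = {\<lceil>\<alpha>\<rceil>..<\<lceil>\<beta>\<rceil>}"
    by (auto simp: ceiling_le_iff less_ceiling_iff)
  then show ?thesis by simp
qed

lemma card_int_Ico_bounds:
  fixes \<alpha> \<beta> :: real
  assumes "\<alpha> \<le> \<beta>"
  shows "\<beta> - \<alpha> - 1 \<le> real (card {x::int. \<alpha> \<le> real_of_int x \<and> real_of_int x < \<beta>})"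
    and "real (card {x::int. \<alpha> \<le> real_of_int x \<and> real_of_int x < \<beta>}) \<le> \<beta> - \<alpha> + 1"
proof -
  have c: "\<lceil>\<alpha>\<rceil> \<le> \<lceil>\<beta>\<rceil>" using assms by (simp add: ceiling_mono)
  have e: "real (card {x::int. \<alpha> \<le> real_of_int x \<and> real_of_int x < \<beta>}) = real_of_int (\<lceil>\<beta>\<rceil> - \<lceil>\<alpha>\<rceil>)"
    using c by (simp add: card_int_Ico_real)
  have h: "\<beta> \<le> \<lceil>\<beta>\<rceil>" "\<lceil>\<beta>\<rceil> < \<beta> + 1" "\<alpha> \<le> \<lceil>\<alpha>\<rceil>" "\<lceil>\<alpha>\<rceil> < \<alpha> + 1"
    by linarith+
  show "\<beta> - \<alpha> - 1 \<le> real (card {x::int. \<alpha> \<le> real_of_int x \<and> real_of_int x < \<beta>})"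
    and "real (card {x::int. \<alpha> \<le> real_of_int x \<and> real_of_int x < \<beta>}) \<le> \<beta> - \<alpha> + 1"
    unfolding e of_int_diff using h by linarith+
qed

lemma card_int_Icc_le:
  fixes \<alpha> \<Delta> :: real
  assumes "0 \<le> \<Delta>"
  shows "real (card {x::int. \<alpha> \<le> real_of_int x \<and> real_of_int x \<le> \<alpha> + \<Delta>}) \<le> \<Delta> + 1"
proof -
  have "{x::int. \<alpha> \<le> real_of_int x \<and> real_of_int x \<le> \<alpha> + \<Delta>} = {\<lceil>\<alpha>\<rceil>..\<lfloor>\<alpha> + \<Delta>\<rfloor>}"
    by (auto simp: ceiling_le_iff le_floor_iff)
  moreover have "real_of_int (\<lfloor>\<alpha> + \<Delta>\<rfloor> + 1 - \<lceil>\<alpha>\<rceil>) \<le> \<Delta> + 1"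
    by linarith
  ultimately show ?thesis using assms by auto
qed


definition dotp :: "nat \<Rightarrow> (nat \<Rightarrow> int) \<Rightarrow> (nat \<Rightarrow> int) \<Rightarrow> int" where
  "dotp d a z = (\<Sum>i<d. a i * z i)"

definition absn :: "nat \<Rightarrow> (nat \<Rightarrow> int) \<Rightarrow> int" where
  "absn d a = (\<Sum>i<d. \<bar>a i\<bar>)"

definition lat :: "nat \<Rightarrow> (nat \<Rightarrow> int) set" where
  "lat d = PiE {..<d} (\<lambda>_. UNIV)"

definition cell :: "nat \<Rightarrow> nat \<Rightarrow> nat \<Rightarrow> (nat \<Rightarrow> int) \<Rightarrow> (nat \<Rightarrow> int)" where
  "cell d m n z = restrict (\<lambda>i. \<lfloor>real m * real_of_int (z i) / real n\<rfloor>) {..<d}"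

definition fib1 :: "nat \<Rightarrow> nat \<Rightarrow> int \<Rightarrow> int set" where
  "fib1 m n v = {x. \<lfloor>real m * real_of_int x / real n\<rfloor> = v}"

lemma fib1_eq:
  assumes "0 < m" "0 < n"
  shows "fib1 m n v = {x::int. real_of_int v * real n / real m \<le> real_of_int x \<and> real_of_int x < (real_of_int v + 1) * real n / real m}"
proof -
  have "\<lfloor>real m * real_of_int x / real n\<rfloor> = v \<longleftrightarrow>
        real_of_int v * real n / real m \<le> real_of_int x \<and> real_of_int x < (real_of_int v + 1) * real n / real m" for x
    using assms by (simp add: floor_eq_iff field_simps)
  then show ?thesis unfolding fib1_def by auto
qed

lemma fib1_card:
  assumes "0 < m" "0 < n"
  shows "real n / real m - 1 \<le> real (card (fib1 m n v))"
    and "real (card (fib1 m n v)) \<le> real n / real m + 1"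
    and "finite (fib1 m n v)"
proof -
  let ?a = "real_of_int v * real n / real m" and ?b = "(real_of_int v + 1) * real n / real m"
  have le: "?a \<le> ?b" using assms by (simp add: divide_right_mono)
  have d: "?b - ?a = real n / real m" by (simp add: distrib_right add_divide_distrib)
  show "real n / real m - 1 \<le> real (card (fib1 m n v))"
    using card_int_Ico_bounds(1)[OF le] d unfolding fib1_eq[OF assms] by simp
  show "real (card (fib1 m n v)) \<le> real n / real m + 1"
    using card_int_Ico_bounds(2)[OF le] d unfolding fib1_eq[OF assms] by simp
  have "{x::int. ?a \<le> real_of_int x \<and> real_of_int x < ?b} = {\<lceil>?a\<rceil>..<\<lceil>?b\<rceil>}"
    by (auto simp: ceiling_le_iff less_ceiling_iff)
  then show "finite (fib1 m n v)" unfolding fib1_eq[OF assms] by simp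
qed

lemma cell_fiber:
  assumes "u \<in> lat d"
  shows "{z \<in> lat d. cell d m n z = u} = PiE {..<d} (\<lambda>i. fib1 m n (u i))"
proof (intro set_eqI iffI)
  fix z assume z: "z \<in> {z \<in> lat d. cell d m n z = u}"
  then have "z \<in> PiE {..<d} (\<lambda>_. UNIV)" "cell d m n z = u" by (auto simp: lat_def)
  then show "z \<in> PiE {..<d} (\<lambda>i. fib1 m n (u i))"
    by (auto simp: PiE_def Pi_def cell_def fib1_def)
next
  fix z assume z: "z \<in> PiE {..<d} (\<lambda>i. fib1 m n (u i))"
  have "cell d m n z = u"
  proof
    fix i show "cell d m n z i = u i"
      using z assms by (cases "i < d") (auto simp: PiE_def Pi_def cell_def fib1_def lat_def extensional_def)
  qed
  then show "z \<in> {z \<in> lat d. cell d m n z = u}" using z by (auto simp: lat_def PiE_def Pi_def)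
qed

lemma cell_fiber_card:
  assumes "u \<in> lat d" "0 < m" "0 < n"
  shows "real (card {z \<in> lat d. cell d m n z = u}) \<le> (real n / real m + 1) ^ d"
    and "1 \<le> real n / real m \<Longrightarrow> (real n / real m - 1) ^ d \<le> real (card {z \<in> lat d. cell d m n z = u})"
    and "finite {z \<in> lat d. cell d m n z = u}"
proof -
  have e: "real (card {z \<in> lat d. cell d m n z = u}) = (\<Prod>i<d. real (card (fib1 m n (u i))))"
    unfolding cell_fiber[OF assms(1)] by (simp add: card_PiE)
  show "real (card {z \<in> lat d. cell d m n z = u}) \<le> (real n / real m + 1) ^ d"
    unfolding e using prod_mono[of "{..<d}" "\<lambda>i. real (card (fib1 m n (u i)))" "\<lambda>_. real n / real m + 1"]
      fib1_card(2)[OF assms(2,3)] by simp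
  show "(real n / real m - 1) ^ d \<le> real (card {z \<in> lat d. cell d m n z = u})" if "1 \<le> real n / real m"
    unfolding e using prod_mono[of "{..<d}" "\<lambda>_. real n / real m - 1" "\<lambda>i. real (card (fib1 m n (u i)))"]
      fib1_card(1)[OF assms(2,3)] that by simp
  show "finite {z \<in> lat d. cell d m n z = u}"
    unfolding cell_fiber[OF assms(1)] using fib1_card(3)[OF assms(2,3)] by (simp add: finite_PiE)
qed

lemma cell_approx:
  assumes "z \<in> lat d" "0 < m" "0 < n"
  shows "\<bar>real_of_int (dotp d a z) / real n - real_of_int (dotp d a (cell d m n z)) / real m\<bar>
           \<le> real_of_int (absn d a) / real m"
proof -
  have t: "\<bar>real_of_int (a i) * (real_of_int (z i) / real n - real_of_int (cell d m n z i) / real m)\<bar>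
            \<le> real_of_int \<bar>a i\<bar> / real m" if "i < d" for i
  proof -
    let ?f = "real m * real_of_int (z i) / real n"
    have c: "cell d m n z i = \<lfloor>?f\<rfloor>" using that by (simp add: cell_def)
    have fl: "\<lfloor>?f\<rfloor> \<le> ?f" "?f < \<lfloor>?f\<rfloor> + 1" by linarith+
    have eq: "real_of_int (z i) / real n - real_of_int \<lfloor>?f\<rfloor> / real m = (?f - \<lfloor>?f\<rfloor>) / real m"
      using assms by (simp add: field_simps)
    have "0 \<le> (?f - \<lfloor>?f\<rfloor>) / real m" using fl assms by simp
    moreover have "(?f - \<lfloor>?f\<rfloor>) / real m < 1 / real m"
      using fl assms by (intro divide_strict_right_mono) (linarith, simp)
    ultimately have "0 \<le> real_of_int (z i) / real n - real_of_int \<lfloor>?f\<rfloor> / real m"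
      "real_of_int (z i) / real n - real_of_int \<lfloor>?f\<rfloor> / real m < 1 / real m"
      unfolding eq by simp_all
    then have "\<bar>real_of_int (z i) / real n - real_of_int (cell d m n z i) / real m\<bar> \<le> 1 / real m"
      unfolding c by simp
    then have "\<bar>real_of_int (a i)\<bar> * \<bar>real_of_int (z i) / real n - real_of_int (cell d m n z i) / real m\<bar>
               \<le> \<bar>real_of_int (a i)\<bar> * (1 / real m)"
      by (rule mult_left_mono) simp
    then show ?thesis by (simp add: abs_mult)
  qed
  have "real_of_int (dotp d a z) / real n - real_of_int (dotp d a (cell d m n z)) / real m
        = (\<Sum>i<d. real_of_int (a i) * (real_of_int (z i) / real n - real_of_int (cell d m n z i) / real m))"
    by (simp add: dotp_def sum_divide_distrib sum_subtractf right_diff_distrib)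
  also have "\<bar>\<dots>\<bar> \<le> (\<Sum>i<d. \<bar>real_of_int (a i) * (real_of_int (z i) / real n - real_of_int (cell d m n z i) / real m)\<bar>)"
    by (rule sum_abs)
  also have "\<dots> \<le> (\<Sum>i<d. real_of_int \<bar>a i\<bar> / real m)"
    by (rule sum_mono) (use t in simp)
  also have "\<dots> = real_of_int (absn d a) / real m"
    by (simp add: absn_def sum_divide_distrib)
  finally show ?thesis .
qed


lemma finite_int_Icc_real: "finite {x::int. \<alpha> \<le> real_of_int x \<and> real_of_int x \<le> \<beta>}"
proof -
  have "{x::int. \<alpha> \<le> real_of_int x \<and> real_of_int x \<le> \<beta>} = {\<lceil>\<alpha>\<rceil>..\<lfloor>\<beta>\<rfloor>}"
    by (auto simp: ceiling_le_iff le_floor_iff)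
  then show ?thesis by simp
qed

lemma int_slab1_sub:
  fixes a0 :: int and L s \<Delta> :: real
  assumes "a0 \<noteq> 0" "0 \<le> \<Delta>"
  shows "\<exists>\<alpha>. {x::int. L < real_of_int (a0 * x) + s \<and> real_of_int (a0 * x) + s \<le> L + \<Delta>}
        \<subseteq> {x::int. \<alpha> \<le> real_of_int x \<and> real_of_int x \<le> \<alpha> + \<Delta>}"
proof (cases "a0 > 0")
  case True
  define \<alpha> where "\<alpha> = (L - s) / real_of_int a0"
  have a: "1 \<le> real_of_int a0" using True by simp
  have D: "\<Delta> \<le> \<Delta> * real_of_int a0" using a assms(2) by (simp add: mult_le_cancel_left1)
  have "{x::int. L < real_of_int (a0 * x) + s \<and> real_of_int (a0 * x) + s \<le> L + \<Delta>}
        \<subseteq> {x::int. \<alpha> \<le> real_of_int x \<and> real_of_int x \<le> \<alpha> + \<Delta>}"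
  proof
    fix x assume "x \<in> {x::int. L < real_of_int (a0 * x) + s \<and> real_of_int (a0 * x) + s \<le> L + \<Delta>}"
    then have h0: "L < real_of_int a0 * real_of_int x + s" "real_of_int a0 * real_of_int x + s \<le> L + \<Delta>"
      by auto
    then have h: "L - s < real_of_int a0 * real_of_int x" "real_of_int a0 * real_of_int x \<le> L - s + \<Delta> * real_of_int a0"
      using D by linarith+
    have p: "0 < real_of_int a0" using True by simp
    have "\<alpha> \<le> real_of_int x" unfolding \<alpha>_def using h(1) p by (simp add: pos_divide_le_eq mult.commute)
    moreover have "real_of_int x \<le> \<alpha> + \<Delta>"
    proof -
      have "real_of_int x \<le> (L - s + \<Delta> * real_of_int a0) / real_of_int a0" using h(2) p
        by (simp add: pos_le_divide_eq mult.commute)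
      also have "(L - s + \<Delta> * real_of_int a0) / real_of_int a0 = \<alpha> + \<Delta>"
        unfolding \<alpha>_def using p by (simp add: add_divide_distrib)
      finally show ?thesis .
    qed
    ultimately show "x \<in> {x::int. \<alpha> \<le> real_of_int x \<and> real_of_int x \<le> \<alpha> + \<Delta>}" by simp
  qed
  then show ?thesis by blast
next
  case False
  then have neg: "a0 < 0" using assms(1) by simp
  define \<alpha> where "\<alpha> = (L - s + \<Delta>) / real_of_int a0"
  have a: "1 \<le> - real_of_int a0" using neg by simp
  have D: "\<Delta> \<le> \<Delta> * (- real_of_int a0)" using mult_left_mono[OF a assms(2)] by simp
  have "{x::int. L < real_of_int (a0 * x) + s \<and> real_of_int (a0 * x) + s \<le> L + \<Delta>}
        \<subseteq> {x::int. \<alpha> \<le> real_of_int x \<and> real_of_int x \<le> \<alpha> + \<Delta>}"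
  proof
    fix x assume "x \<in> {x::int. L < real_of_int (a0 * x) + s \<and> real_of_int (a0 * x) + s \<le> L + \<Delta>}"
    then have h0: "L < real_of_int a0 * real_of_int x + s" "real_of_int a0 * real_of_int x + s \<le> L + \<Delta>"
      by auto
    then have h: "L - s - \<Delta> * (- real_of_int a0) < real_of_int a0 * real_of_int x - \<Delta>" "real_of_int a0 * real_of_int x \<le> L - s + \<Delta>"
      using D by linarith+
    have p: "real_of_int a0 < 0" using neg by simp
    have "\<alpha> \<le> real_of_int x" unfolding \<alpha>_def using h(2) p by (simp add: neg_divide_le_eq mult.commute)
    moreover have "real_of_int x \<le> \<alpha> + \<Delta>"
    proof -
      have "real_of_int x \<le> (L - s + \<Delta> + \<Delta> * real_of_int a0) / real_of_int a0" using h(1) p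
        by (simp add: neg_le_divide_eq mult.commute)
      also have "(L - s + \<Delta> + \<Delta> * real_of_int a0) / real_of_int a0 = \<alpha> + \<Delta>"
        unfolding \<alpha>_def using p by (simp add: add_divide_distrib)
      finally show ?thesis .
    qed
    ultimately show "x \<in> {x::int. \<alpha> \<le> real_of_int x \<and> real_of_int x \<le> \<alpha> + \<Delta>}" by simp
  qed
  then show ?thesis by blast
qed

lemma int_slab1:
  fixes a0 :: int and L s \<Delta> :: real
  assumes "a0 \<noteq> 0" "0 \<le> \<Delta>"
  shows "real (card {x::int. L < real_of_int (a0 * x) + s \<and> real_of_int (a0 * x) + s \<le> L + \<Delta>}) \<le> \<Delta> + 1"
    and "finite {x::int. L < real_of_int (a0 * x) + s \<and> real_of_int (a0 * x) + s \<le> L + \<Delta>}"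
proof -
  obtain \<alpha> where sub: "{x::int. L < real_of_int (a0 * x) + s \<and> real_of_int (a0 * x) + s \<le> L + \<Delta>}
        \<subseteq> {x::int. \<alpha> \<le> real_of_int x \<and> real_of_int x \<le> \<alpha> + \<Delta>}"
    using int_slab1_sub[OF assms] by blast
  have "card {x::int. L < real_of_int (a0 * x) + s \<and> real_of_int (a0 * x) + s \<le> L + \<Delta>}
        \<le> card {x::int. \<alpha> \<le> real_of_int x \<and> real_of_int x \<le> \<alpha> + \<Delta>}"
    by (rule card_mono[OF finite_int_Icc_real sub])
  then show "real (card {x::int. L < real_of_int (a0 * x) + s \<and> real_of_int (a0 * x) + s \<le> L + \<Delta>}) \<le> \<Delta> + 1"
    using card_int_Icc_le[OF assms(2), of \<alpha>] by linarith
  show "finite {x::int. L < real_of_int (a0 * x) + s \<and> real_of_int (a0 * x) + s \<le> L + \<Delta>}"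
    by (rule finite_subset[OF sub finite_int_Icc_real])
qed

lemma card_fibers_le:
  fixes f :: "'a \<Rightarrow> 'b"
  assumes "finite W" "\<And>y. y \<in> f ` W \<Longrightarrow> real (card {x \<in> W. f x = y}) \<le> B"
  shows "real (card W) \<le> real (card (f ` W)) * B"
proof -
  have W: "W = (\<Union>y\<in>f ` W. {x \<in> W. f x = y})" by auto
  have "card W \<le> (\<Sum>y\<in>f ` W. card {x \<in> W. f x = y})"
    by (subst W) (rule card_UN_le, simp add: assms(1))
  then have "real (card W) \<le> (\<Sum>y\<in>f ` W. real (card {x \<in> W. f x = y}))"
    by (metis of_nat_le_iff of_nat_sum)
  also have "\<dots> \<le> (\<Sum>y\<in>f ` W. B)" by (rule sum_mono) (rule assms(2))
  finally show ?thesis by (simp add: mult.commute)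
qed

lemma dotp_split0:
  assumes "0 < d"
  shows "dotp d a u = a 0 * u 0 + (\<Sum>i\<in>{1..<d}. a i * u i)"
proof -
  have "{..<d} = insert 0 {1..<d}" using assms by auto
  then show ?thesis unfolding dotp_def by simp
qed

lemma slab_card:
  fixes K :: int and L \<Delta> :: real
  assumes "a 0 \<noteq> 0" "0 < d" "0 \<le> \<Delta>" "0 \<le> K"
  shows "real (card {u \<in> PiE {..<d} (\<lambda>_. {-K..K}). L < real_of_int (dotp d a u) \<and> real_of_int (dotp d a u) \<le> L + \<Delta>})
          \<le> real_of_int (2*K+1) ^ (d-1) * (\<Delta> + 1)"
proof -
  define W where "W = {u \<in> PiE {..<d} (\<lambda>_. {-K..K}). L < real_of_int (dotp d a u) \<and> real_of_int (dotp d a u) \<le> L + \<Delta>}"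
  define pr where "pr = (\<lambda>u::nat\<Rightarrow>int. restrict u {1..<d})"
  have fW: "finite W" unfolding W_def by (rule finite_subset[of _ "PiE {..<d} (\<lambda>_. {-K..K})"]) (auto simp: finite_PiE)
  have fib: "real (card {u \<in> W. pr u = \<rho>}) \<le> \<Delta> + 1" if "\<rho> \<in> pr ` W" for \<rho>
  proof -
    define s where "s = real_of_int (\<Sum>i\<in>{1..<d}. a i * \<rho> i)"
    have inj: "inj_on (\<lambda>u. u 0) {u \<in> W. pr u = \<rho>}"
    proof (rule inj_onI)
      fix u v assume u: "u \<in> {u \<in> W. pr u = \<rho>}" and v: "v \<in> {u \<in> W. pr u = \<rho>}" and e: "u 0 = v 0"
      show "u = v"
      proof
        fix i
        show "u i = v i"
        proof (cases "i = 0")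
          case True then show ?thesis using e by simp
        next
          case False
          show ?thesis
          proof (cases "i < d")
            case True
            then have "pr u i = pr v i" using u v by simp
            then show ?thesis using True False by (simp add: pr_def)
          next
            case False
            then show ?thesis using u v by (auto simp: W_def PiE_def extensional_def)
          qed
        qed
      qed
    qed
    have img: "(\<lambda>u. u 0) ` {u \<in> W. pr u = \<rho>} \<subseteq> {x::int. L < real_of_int (a 0 * x) + s \<and> real_of_int (a 0 * x) + s \<le> L + \<Delta>}"
    proof
      fix x assume "x \<in> (\<lambda>u. u 0) ` {u \<in> W. pr u = \<rho>}"
      then obtain u where u: "u \<in> W" "pr u = \<rho>" "x = u 0" by auto
      have "(\<Sum>i\<in>{1..<d}. a i * u i) = (\<Sum>i\<in>{1..<d}. a i * \<rho> i)"
        using u(2) by (intro sum.cong) (auto simp: pr_def)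
      then have "dotp d a u = a 0 * x + (\<Sum>i\<in>{1..<d}. a i * \<rho> i)"
        using dotp_split0[OF assms(2)] u(3) by simp
      then show "x \<in> {x::int. L < real_of_int (a 0 * x) + s \<and> real_of_int (a 0 * x) + s \<le> L + \<Delta>}"
      proof -
        have "L < real_of_int (dotp d a u)" "real_of_int (dotp d a u) \<le> L + \<Delta>" using u(1) unfolding W_def by blast+
        then show ?thesis unfolding \<open>dotp d a u = a 0 * x + (\<Sum>i\<in>{1..<d}. a i * \<rho> i)\<close> s_def by simp
      qed
    qed
    have fin2: "finite {x::int. L < real_of_int (a 0 * x) + s \<and> real_of_int (a 0 * x) + s \<le> L + \<Delta>}"
      by (rule int_slab1(2)[OF assms(1) assms(3)])
    have "card {u \<in> W. pr u = \<rho>} \<le> card {x::int. L < real_of_int (a 0 * x) + s \<and> real_of_int (a 0 * x) + s \<le> L + \<Delta>}"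
      by (rule card_inj_on_le[OF inj img fin2])
    then show ?thesis using int_slab1(1)[OF assms(1) assms(3), of L s] by linarith
  qed
  have pW: "pr ` W \<subseteq> PiE {1..<d} (\<lambda>_. {-K..K})"
  proof
    fix v assume "v \<in> pr ` W"
    then obtain u where u: "u \<in> W" "v = pr u" by blast
    have "u \<in> PiE {..<d} (\<lambda>_. {-K..K})" using u(1) unfolding W_def by blast
    then have "\<forall>i\<in>{1..<d}. u i \<in> {-K..K}" by (auto simp: PiE_iff)
    then show "v \<in> PiE {1..<d} (\<lambda>_. {-K..K})" unfolding u(2) pr_def by (simp add: restrict_PiE_iff)
  qed
  have "card (pr ` W) \<le> card (PiE {1..<d} (\<lambda>_. {-K..K}))"
    by (rule card_mono[OF _ pW]) (simp add: finite_PiE)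
  also have "card (PiE {1..<d} (\<lambda>_. {-K..K})) = nat (2*K+1) ^ (d-1)"
    by (simp add: card_PiE)
  finally have c0: "real (card (pr ` W)) \<le> real (nat (2*K+1) ^ (d-1))"
    by (rule of_nat_mono)
  have e: "real (nat (2*K+1) ^ (d-1)) = real_of_int (2*K+1) ^ (d-1)"
    using assms(4) by (simp add: of_nat_power)
  have c: "real (card (pr ` W)) \<le> real_of_int (2*K+1) ^ (d-1)" using c0 e by linarith
  have "real (card W) \<le> real (card (pr ` W)) * (\<Delta> + 1)"
    by (rule card_fibers_le[OF fW fib])
  also have "\<dots> \<le> real_of_int (2*K+1) ^ (d-1) * (\<Delta> + 1)"
    using c assms(3) by (intro mult_right_mono) auto
  finally show ?thesis unfolding W_def .
qed


definition latS :: "nat \<Rightarrow> 'j set \<Rightarrow> ('j \<Rightarrow> nat \<Rightarrow> int) \<Rightarrow> ('j \<Rightarrow> nat \<Rightarrow> real) \<Rightarrow> nat \<Rightarrow> (nat \<Rightarrow> int) set" where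
  "latS d J a c n = {z \<in> lat d. \<forall>j\<in>J. real_of_int (dotp d (a j) z) \<le> c j n}"

lemma cell_in_lat: "cell d m n z \<in> lat d"
  by (simp add: cell_def lat_def)

lemma latS_finite:
  assumes "\<forall>z \<in> latS d J a c n. \<forall>i<d. \<bar>real_of_int (z i)\<bar> \<le> B"
  shows "finite (latS d J a c n)"
proof (rule finite_subset)
  show "latS d J a c n \<subseteq> PiE {..<d} (\<lambda>_. {-\<lceil>B\<rceil>..\<lceil>B\<rceil>})"
  proof
    fix z assume z: "z \<in> latS d J a c n"
    then have "z \<in> lat d" by (simp add: latS_def)
    moreover have "\<forall>i<d. z i \<in> {-\<lceil>B\<rceil>..\<lceil>B\<rceil>}"
    proof (intro allI impI)
      fix i assume "i < d"
      then have "\<bar>real_of_int (z i)\<bar> \<le> B" using assms z by blast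
      then show "z i \<in> {-\<lceil>B\<rceil>..\<lceil>B\<rceil>}" by (simp add: abs_le_iff) linarith
    qed
    ultimately show "z \<in> PiE {..<d} (\<lambda>_. {-\<lceil>B\<rceil>..\<lceil>B\<rceil>})"
      by (auto simp: lat_def PiE_iff)
  qed
  show "finite (PiE {..<d} (\<lambda>_. {-\<lceil>B\<rceil>..\<lceil>B\<rceil>}))" by (simp add: finite_PiE)
qed

lemma lower_claim:
  fixes \<epsilon> :: real and m n :: nat
  assumes "0 < m" "0 < n" "1 \<le> real n / real m"
    and fin: "finite (latS d J a c n)"
    and fG: "finite G"
    and G: "\<And>u j. u \<in> G \<Longrightarrow> j \<in> J \<Longrightarrow> real_of_int (dotp d (a j) u + absn d (a j)) \<le> real m * (\<gamma> j - \<epsilon>)"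
    and Glat: "G \<subseteq> lat d"
    and cn: "\<And>j. j \<in> J \<Longrightarrow> \<gamma> j - \<epsilon> < c j n / real n"
  shows "real (card G) * (real n / real m - 1) ^ d \<le> real (card (latS d J a c n))"
proof -
  define F where "F u = {z \<in> lat d. cell d m n z = u}" for u
  have sub: "(\<Union>u\<in>G. F u) \<subseteq> latS d J a c n"
  proof
    fix z assume "z \<in> (\<Union>u\<in>G. F u)"
    then obtain u where u: "u \<in> G" "z \<in> lat d" "cell d m n z = u" by (auto simp: F_def)
    have "real_of_int (dotp d (a j) z) \<le> c j n" if j: "j \<in> J" for j
    proof -
      have ap: "\<bar>real_of_int (dotp d (a j) z) / real n - real_of_int (dotp d (a j) u) / real m\<bar>
           \<le> real_of_int (absn d (a j)) / real m"
        using cell_approx[OF u(2) assms(1,2), of "a j"] u(3) by simp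
      have "real_of_int (dotp d (a j) u) / real m + real_of_int (absn d (a j)) / real m
            = real_of_int (dotp d (a j) u + absn d (a j)) / real m" by (simp add: add_divide_distrib)
      also have "\<dots> \<le> \<gamma> j - \<epsilon>" using G[OF u(1) j] assms(1) by (simp add: divide_le_eq mult.commute)
      finally have "real_of_int (dotp d (a j) z) / real n < c j n / real n" using ap cn[OF j] by linarith
      then show ?thesis using assms(2) by (simp add: divide_less_cancel)
    qed
    then show "z \<in> latS d J a c n" using u(2) by (simp add: latS_def)
  qed
  have disj: "\<forall>u\<in>G. \<forall>v\<in>G. u \<noteq> v \<longrightarrow> F u \<inter> F v = {}" by (auto simp: F_def)
  have fF: "\<forall>u\<in>G. finite (F u)" using cell_fiber_card(3)[OF _ assms(1,2)] Glat unfolding F_def by blast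
  have "card (\<Union>u\<in>G. F u) = (\<Sum>u\<in>G. card (F u))"
    by (rule card_UN_disjoint[OF fG]) (use fF disj in auto)
  then have "real (card (\<Union>u\<in>G. F u)) = (\<Sum>u\<in>G. real (card (F u)))" by simp
  also have "\<dots> \<ge> (\<Sum>u\<in>G. (real n / real m - 1) ^ d)"
    by (rule sum_mono) (use cell_fiber_card(2)[OF _ assms(1,2) assms(3)] Glat in \<open>auto simp: F_def\<close>)
  finally have "real (card G) * (real n / real m - 1) ^ d \<le> real (card (\<Union>u\<in>G. F u))" by simp
  also have "\<dots> \<le> real (card (latS d J a c n))" using card_mono[OF fin sub] by simp
  finally show ?thesis .
qed

lemma upper_claim:
  fixes \<epsilon> C :: real and m n :: nat and K :: int
  assumes "0 < m" "0 < n"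
    and bd: "\<forall>z \<in> latS d J a c n. \<forall>i<d. \<bar>real_of_int (z i)\<bar> \<le> C * real n"
    and K: "real m * C + 1 \<le> real_of_int K"
    and cn: "\<And>j. j \<in> J \<Longrightarrow> c j n / real n < \<gamma> j + \<epsilon>"
  shows "real (card (latS d J a c n)) \<le> real (card {u \<in> PiE {..<d} (\<lambda>_. {-K..K}). \<forall>j\<in>J.
            real_of_int (dotp d (a j) u - absn d (a j)) \<le> real m * (\<gamma> j + \<epsilon>)}) * (real n / real m + 1) ^ d"
proof -
  define M where "M = {u \<in> PiE {..<d} (\<lambda>_. {-K..K}). \<forall>j\<in>J.
            real_of_int (dotp d (a j) u - absn d (a j)) \<le> real m * (\<gamma> j + \<epsilon>)}"
  define F where "F u = {z \<in> lat d. cell d m n z = u}" for u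
  have fM: "finite M" unfolding M_def
    by (rule finite_subset[of _ "PiE {..<d} (\<lambda>_. {-K..K})"]) (auto simp: finite_PiE)
  have sub: "latS d J a c n \<subseteq> (\<Union>u\<in>M. F u)"
  proof
    fix z assume z: "z \<in> latS d J a c n"
    then have zl: "z \<in> lat d" by (simp add: latS_def)
    define u where "u = cell d m n z"
    have "u i \<in> {-K..K}" if "i < d" for i
    proof -
      let ?f = "real m * real_of_int (z i) / real n"
      have "\<bar>real_of_int (z i)\<bar> \<le> C * real n" using bd z that by blast
      then have A: "\<bar>?f\<bar> \<le> real m * C" using assms(1,2)
        by (simp add: abs_mult abs_divide divide_le_eq mult.commute mult.left_commute mult_left_mono)
      have A1: "?f \<le> real m * C" "- ?f \<le> real m * C" using abs_le_D1[OF A] abs_le_D2[OF A] by simp_all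
      have B: "real_of_int (u i) = real_of_int \<lfloor>?f\<rfloor>" using that by (simp add: u_def cell_def)
      have fl: "?f - 1 < \<lfloor>?f\<rfloor>" "\<lfloor>?f\<rfloor> \<le> ?f" by linarith+
      have "real_of_int (u i) \<le> real m * C + 1" "- real_of_int (u i) \<le> real m * C + 1"
        using A1 B fl by linarith+
      then have "\<bar>real_of_int (u i)\<bar> \<le> real m * C + 1" by (rule abs_leI)
      then show ?thesis using K by (simp add: abs_le_iff)
    qed
    then have uP: "u \<in> PiE {..<d} (\<lambda>_. {-K..K})" by (auto simp: u_def cell_def PiE_iff)
    have "real_of_int (dotp d (a j) u - absn d (a j)) \<le> real m * (\<gamma> j + \<epsilon>)" if j: "j \<in> J" for j
    proof -
      have ap: "\<bar>real_of_int (dotp d (a j) z) / real n - real_of_int (dotp d (a j) u) / real m\<bar>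
           \<le> real_of_int (absn d (a j)) / real m"
        using cell_approx[OF zl assms(1,2), of "a j"] by (simp add: u_def)
      have "real_of_int (dotp d (a j) z) \<le> c j n" using z j by (simp add: latS_def)
      then have "real_of_int (dotp d (a j) z) / real n \<le> c j n / real n" using assms(2) by (simp add: divide_right_mono)
      then have "real_of_int (dotp d (a j) u) / real m - real_of_int (absn d (a j)) / real m \<le> \<gamma> j + \<epsilon>"
        using ap cn[OF j] by linarith
      then have "real_of_int (dotp d (a j) u - absn d (a j)) / real m \<le> \<gamma> j + \<epsilon>" by (simp add: diff_divide_distrib)
      then show ?thesis using assms(1) by (simp add: divide_le_eq mult.commute)
    qed
    then have "u \<in> M" using uP by (simp add: M_def)
    moreover have "z \<in> F u" using zl by (simp add: F_def u_def)
    ultimately show "z \<in> (\<Union>u\<in>M. F u)" by blast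
  qed
  have fF: "\<forall>u\<in>M. finite (F u)" using cell_fiber_card(3)[OF _ assms(1,2)] unfolding F_def M_def
    by (auto simp: lat_def PiE_iff)
  have "card (latS d J a c n) \<le> card (\<Union>u\<in>M. F u)"
    by (rule card_mono[OF _ sub]) (use fM fF in auto)
  also have "\<dots> \<le> (\<Sum>u\<in>M. card (F u))" by (rule card_UN_le[OF fM])
  finally have "real (card (latS d J a c n)) \<le> (\<Sum>u\<in>M. real (card (F u)))"
    by (metis of_nat_le_iff of_nat_sum)
  also have "\<dots> \<le> (\<Sum>u\<in>M. (real n / real m + 1) ^ d)"
    by (rule sum_mono) (use cell_fiber_card(1)[OF _ assms(1,2)] in \<open>auto simp: F_def M_def lat_def PiE_iff\<close>)
  finally show ?thesis by (simp add: M_def)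
qed


lemma cauchy_from_bands:
  fixes f :: "nat \<Rightarrow> real"
  assumes "\<And>\<eta>. 0 < \<eta> \<Longrightarrow> \<exists>Lo. eventually (\<lambda>n. Lo \<le> f n \<and> f n \<le> Lo + \<eta>) sequentially"
  shows "convergent f"
proof -
  have "Cauchy f"
  proof (rule metric_CauchyI)
    fix e :: real assume e: "0 < e"
    obtain Lo where "eventually (\<lambda>n. Lo \<le> f n \<and> f n \<le> Lo + e/2) sequentially"
      using assms[of "e/2"] e by auto
    then obtain N where N: "\<And>n. n \<ge> N \<Longrightarrow> Lo \<le> f n \<and> f n \<le> Lo + e/2"
      by (auto simp: eventually_sequentially)
    have "dist (f p) (f q) < e" if "p \<ge> N" "q \<ge> N" for p q
    proof -
      have "Lo \<le> f p" "f p \<le> Lo + e/2" "Lo \<le> f q" "f q \<le> Lo + e/2" using N that by auto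
      then show ?thesis using e by (simp add: dist_real_def abs_diff_less_iff)
    qed
    then show "\<exists>M. \<forall>p\<ge>M. \<forall>q\<ge>M. dist (f p) (f q) < e" by blast
  qed
  then show ?thesis by (simp add: Cauchy_convergent_iff)
qed

theorem lattice_convergent:
  fixes J :: "'j set" and a :: "'j \<Rightarrow> nat \<Rightarrow> int" and c :: "'j \<Rightarrow> nat \<Rightarrow> real"
    and \<gamma> :: "'j \<Rightarrow> real" and C :: real and d :: nat
  assumes fJ: "finite J" and d: "0 < d"
    and a0: "\<forall>j\<in>J. a j 0 \<noteq> 0"
    and lim: "\<forall>j\<in>J. (\<lambda>n. c j n / real n) \<longlonglongrightarrow> \<gamma> j"
    and bnd: "eventually (\<lambda>n. \<forall>z \<in> latS d J a c n. \<forall>i<d. \<bar>real_of_int (z i)\<bar> \<le> C * real n) sequentially"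
  shows "convergent (\<lambda>n. real (card (latS d J a c n)) / real n ^ d)"
proof (rule cauchy_from_bands)
  fix \<eta> :: real assume \<eta>: "0 < \<eta>"
  define C1 where "C1 = max C 1"
  have C1: "1 \<le> C1" by (simp add: C1_def)
  have bnd1: "eventually (\<lambda>n. \<forall>z \<in> latS d J a c n. \<forall>i<d. \<bar>real_of_int (z i)\<bar> \<le> C1 * real n) sequentially"
  proof (rule eventually_mono[OF bnd])
    fix n assume h: "\<forall>z \<in> latS d J a c n. \<forall>i<d. \<bar>real_of_int (z i)\<bar> \<le> C * real n"
    have "C * real n \<le> C1 * real n" by (simp add: C1_def mult_right_mono)
    then show "\<forall>z \<in> latS d J a c n. \<forall>i<d. \<bar>real_of_int (z i)\<bar> \<le> C1 * real n" using h by fastforce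
  qed
  define Atot where "Atot = (\<Sum>j\<in>J. real_of_int (absn d (a j)))"
  have absn_nn: "0 \<le> absn d b" for b by (simp add: absn_def sum_nonneg)
  have Atot: "0 \<le> Atot" unfolding Atot_def by (rule sum_nonneg) (simp add: absn_nn)
  define Jn where "Jn = real (card J)"
  have Jn: "0 \<le> Jn" by (simp add: Jn_def)
  define Q where "Q = (2*C1+5)^(d-1)"
  have Q1: "1 \<le> Q" unfolding Q_def using C1 by (intro one_le_power) simp
  define \<epsilon> where "\<epsilon> = \<eta> / (8 * (Jn+1) * Q)"
  have \<epsilon>: "0 < \<epsilon>" unfolding \<epsilon>_def using \<eta> Jn Q1 by simp
  have \<epsilon>b: "2 * \<epsilon> * Jn * Q \<le> \<eta> / 4"
  proof -
    have ne: "8 * (Jn + 1) * Q \<noteq> 0" using Q1 Jn by auto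
    have e8: "\<epsilon> * (8 * (Jn + 1) * Q) = \<eta>" unfolding \<epsilon>_def using ne by simp
    have "\<epsilon> * Jn * Q \<le> \<epsilon> * (Jn + 1) * Q" using \<epsilon> Q1 by (intro mult_right_mono mult_left_mono) simp_all
    then show ?thesis using e8 by (simp add: algebra_simps)
  qed
  define T where "T = Q * (2 * Atot + Jn)"
  have T: "0 \<le> T" unfolding T_def using Q1 Atot Jn by simp
  define m :: nat where "m = nat \<lceil>4 * T / \<eta>\<rceil> + 1"
  have m1: "1 \<le> m" by (simp add: m_def)
  have mpos: "0 < real m" using m1 by simp
  have mb: "T \<le> real m * (\<eta> / 4)"
  proof -
    have "4 * T / \<eta> \<le> real m" unfolding m_def by linarith
    then have "4 * T \<le> real m * \<eta>" using \<eta> by (simp add: divide_le_eq)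
    then show ?thesis by simp
  qed
  define K :: int where "K = \<lceil>real m * C1\<rceil> + 1"
  have K: "real m * C1 + 1 \<le> real_of_int K" unfolding K_def by linarith
  have K0: "0 \<le> K"
  proof -
    have "0 \<le> real m * C1" using C1 by simp
    then show ?thesis unfolding K_def by linarith
  qed
  have K2: "real_of_int (2*K+1) \<le> real m * (2*C1+5)"
  proof -
    have "real_of_int K \<le> real m * C1 + 2" unfolding K_def by linarith
    then have "real_of_int (2*K+1) \<le> 2 * real m * C1 + 5" by simp
    also have "\<dots> \<le> real m * (2*C1+5)" using m1 by (simp add: algebra_simps)
    finally show ?thesis .
  qed
  define U where "U = PiE {..<d} (\<lambda>_. {-K..K})"
  have fU: "finite U" by (simp add: U_def finite_PiE)
  define G where "G = {u \<in> U. \<forall>j\<in>J. real_of_int (dotp d (a j) u + absn d (a j)) \<le> real m * (\<gamma> j - \<epsilon>)}"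
  define M where "M = {u \<in> U. \<forall>j\<in>J. real_of_int (dotp d (a j) u - absn d (a j)) \<le> real m * (\<gamma> j + \<epsilon>)}"
  have fG: "finite G" and fM: "finite M" using fU by (simp_all add: G_def M_def)
  have GM: "G \<subseteq> M"
  proof
    fix u assume u: "u \<in> G"
    have "real_of_int (dotp d (a j) u - absn d (a j)) \<le> real m * (\<gamma> j + \<epsilon>)" if j: "j \<in> J" for j
    proof -
      have "real_of_int (dotp d (a j) u + absn d (a j)) \<le> real m * (\<gamma> j - \<epsilon>)" using u j by (simp add: G_def)
      moreover have "0 \<le> real_of_int (absn d (a j))" using absn_nn by simp
      moreover have "real m * (\<gamma> j - \<epsilon>) \<le> real m * (\<gamma> j + \<epsilon>)" using \<epsilon> mpos by simp
      ultimately show ?thesis by simp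
    qed
    then show "u \<in> M" using u by (simp add: G_def M_def)
  qed
  define Sl where "Sl j = {u \<in> U. real m * (\<gamma> j - \<epsilon>) - real_of_int (absn d (a j)) < real_of_int (dotp d (a j) u)
      \<and> real_of_int (dotp d (a j) u) \<le> (real m * (\<gamma> j - \<epsilon>) - real_of_int (absn d (a j))) + (2 * real m * \<epsilon> + 2 * real_of_int (absn d (a j)))}" for j
  have MG: "M - G \<subseteq> (\<Union>j\<in>J. Sl j)"
  proof
    fix u assume u: "u \<in> M - G"
    then obtain j where j: "j \<in> J" "\<not> real_of_int (dotp d (a j) u + absn d (a j)) \<le> real m * (\<gamma> j - \<epsilon>)"
      using u by (auto simp: G_def M_def)
    have "real_of_int (dotp d (a j) u - absn d (a j)) \<le> real m * (\<gamma> j + \<epsilon>)" using u j(1) by (simp add: M_def)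
    then have "u \<in> Sl j" using j(2) u by (simp add: Sl_def M_def algebra_simps)
    then show "u \<in> (\<Union>j\<in>J. Sl j)" using j(1) by blast
  qed
  have Slc: "real (card (Sl j)) \<le> real_of_int (2*K+1) ^ (d-1) * (2 * real m * \<epsilon> + 2 * real_of_int (absn d (a j)) + 1)"
    if j: "j \<in> J" for j
    using slab_card[of "a j" d "2 * real m * \<epsilon> + 2 * real_of_int (absn d (a j))" K
        "real m * (\<gamma> j - \<epsilon>) - real_of_int (absn d (a j))"] a0 j d K0 \<epsilon> mpos absn_nn[of "a j"]
    unfolding Sl_def U_def by simp
  have diff: "real (card M) - real (card G) \<le> real m ^ d * (\<eta> / 2)"
  proof -
    have "card M - card G = card (M - G)" using card_Diff_subset[OF fG GM] by simp
    moreover have "card G \<le> card M" using card_mono[OF fM GM] .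
    ultimately have e1: "real (card M) - real (card G) = real (card (M - G))" by simp
    have sumeq: "(\<Sum>j\<in>J. (2 * real m * \<epsilon> + 1) + 2 * real_of_int (absn d (a j))) = Jn * (2 * real m * \<epsilon>) + 2 * Atot + Jn"
    proof -
      have "(\<Sum>j\<in>J. 2 * real_of_int (absn d (a j))) = 2 * Atot" by (simp add: Atot_def sum_distrib_left)
      then show ?thesis by (simp add: sum.distrib Jn_def algebra_simps)
    qed
    have "card (M - G) \<le> card (\<Union>j\<in>J. Sl j)"
      by (rule card_mono[OF _ MG]) (use fJ fU in \<open>auto simp: Sl_def\<close>)
    also have "\<dots> \<le> (\<Sum>j\<in>J. card (Sl j))" by (rule card_UN_le[OF fJ])
    finally have "real (card (M - G)) \<le> (\<Sum>j\<in>J. real (card (Sl j)))"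
      by (metis of_nat_le_iff of_nat_sum)
    also have "\<dots> \<le> (\<Sum>j\<in>J. real_of_int (2*K+1) ^ (d-1) * (2 * real m * \<epsilon> + 2 * real_of_int (absn d (a j)) + 1))"
      by (rule sum_mono) (rule Slc)
    also have "\<dots> = real_of_int (2*K+1) ^ (d-1) * (\<Sum>j\<in>J. (2 * real m * \<epsilon> + 1) + 2 * real_of_int (absn d (a j)))"
      by (simp add: sum_distrib_left[symmetric] add_ac)
    also have "\<dots> = real_of_int (2*K+1) ^ (d-1) * (Jn * (2 * real m * \<epsilon>) + 2 * Atot + Jn)"
      using sumeq by simp
    also have "\<dots> \<le> (real m * (2*C1+5)) ^ (d-1) * (Jn * (2 * real m * \<epsilon>) + 2 * Atot + Jn)"
      using K2 K0 Jn \<epsilon> mpos Atot by (intro mult_right_mono power_mono) simp_all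
    also have "\<dots> = real m ^ (d-1) * (real m * (2 * \<epsilon> * Jn * Q) + T)"
      unfolding power_mult_distrib Q_def T_def by (simp add: algebra_simps)
    also have "\<dots> \<le> real m ^ (d-1) * (real m * (\<eta>/4) + real m * (\<eta>/4))"
      using \<epsilon>b mb mpos by (intro mult_left_mono add_mono mult_left_mono) simp_all
    also have "\<dots> = real m ^ Suc (d-1) * (\<eta> / 2)" by (simp add: algebra_simps)
    also have "Suc (d-1) = d" using d by simp
    finally show ?thesis using e1 by simp
  qed
  have ev1: "eventually (\<lambda>n. \<forall>j\<in>J. \<gamma> j - \<epsilon> < c j n / real n \<and> c j n / real n < \<gamma> j + \<epsilon>) sequentially"
  proof (rule eventually_ball_finite[OF fJ], intro ballI)
    fix j assume "j \<in> J"
    then have t: "(\<lambda>n. c j n / real n) \<longlonglongrightarrow> \<gamma> j" using lim by blast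
    have "eventually (\<lambda>n. \<gamma> j - \<epsilon> < c j n / real n) sequentially"
      using order_tendstoD(1)[OF t, of "\<gamma> j - \<epsilon>"] \<epsilon> by simp
    moreover have "eventually (\<lambda>n. c j n / real n < \<gamma> j + \<epsilon>) sequentially"
      using order_tendstoD(2)[OF t, of "\<gamma> j + \<epsilon>"] \<epsilon> by simp
    ultimately show "eventually (\<lambda>n. \<gamma> j - \<epsilon> < c j n / real n \<and> c j n / real n < \<gamma> j + \<epsilon>) sequentially"
      by (rule eventually_conj)
  qed
  have ev2: "eventually (\<lambda>n. m \<le> n) sequentially" by (rule eventually_ge_at_top)
  have inv0: "(\<lambda>n. 1 / real n) \<longlonglongrightarrow> 0" by (rule lim_1_over_n)
  have g1: "(\<lambda>n. real (card G) * (1 / real m - 1 / real n) ^ d) \<longlonglongrightarrow> real (card G) * (1 / real m - 0) ^ d"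
    by (intro tendsto_intros inv0)
  have g2: "(\<lambda>n. real (card M) * (1 / real m + 1 / real n) ^ d) \<longlonglongrightarrow> real (card M) * (1 / real m + 0) ^ d"
    by (intro tendsto_intros inv0)
  define Lo where "Lo = real (card G) * (1 / real m) ^ d - \<eta> / 4"
  have ev3: "eventually (\<lambda>n. Lo < real (card G) * (1 / real m - 1 / real n) ^ d) sequentially"
    using order_tendstoD(1)[OF g1, of Lo] \<eta> unfolding Lo_def by simp
  have ev4: "eventually (\<lambda>n. real (card M) * (1 / real m + 1 / real n) ^ d < real (card M) * (1 / real m) ^ d + \<eta> / 4) sequentially"
    using order_tendstoD(2)[OF g2, of "real (card M) * (1 / real m) ^ d + \<eta> / 4"] \<eta> by simp
  have MGb: "real (card M) * (1 / real m) ^ d \<le> real (card G) * (1 / real m) ^ d + \<eta> / 2"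
  proof -
    have "(real (card M) - real (card G)) * (1 / real m) ^ d \<le> real m ^ d * (\<eta> / 2) * (1 / real m) ^ d"
      using diff by (intro mult_right_mono) simp_all
    also have "\<dots> = \<eta> / 2" using mpos by (simp add: power_one_over)
    finally show ?thesis by (simp add: algebra_simps)
  qed
  have "eventually (\<lambda>n. Lo \<le> real (card (latS d J a c n)) / real n ^ d \<and>
                        real (card (latS d J a c n)) / real n ^ d \<le> Lo + \<eta>) sequentially"
    using ev1 ev2 ev3 ev4 bnd1
  proof eventually_elim
    case (elim n)
    have npos: "0 < n" using elim(2) m1 by simp
    have nm: "1 \<le> real n / real m" using elim(2) mpos by simp
    have fin: "finite (latS d J a c n)" by (rule latS_finite[OF elim(5)])
    have low: "real (card G) * (real n / real m - 1) ^ d \<le> real (card (latS d J a c n))"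
    proof (rule lower_claim[OF _ npos nm fin fG, where \<gamma>=\<gamma> and \<epsilon>=\<epsilon>])
      show "0 < m" using m1 by simp
      show "\<And>u j. u \<in> G \<Longrightarrow> j \<in> J \<Longrightarrow> real_of_int (dotp d (a j) u + absn d (a j)) \<le> real m * (\<gamma> j - \<epsilon>)"
        by (simp add: G_def)
      have "U \<subseteq> lat d" unfolding U_def lat_def by (rule PiE_mono) simp
      then show "G \<subseteq> lat d" by (auto simp: G_def)
      show "\<And>j. j \<in> J \<Longrightarrow> \<gamma> j - \<epsilon> < c j n / real n" using elim(1) by blast
    qed
    have up: "real (card (latS d J a c n)) \<le> real (card M) * (real n / real m + 1) ^ d"
      unfolding M_def U_def
      by (rule upper_claim[OF _ npos elim(5) K]) (use m1 elim(1) in auto)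
    have e1: "(real n / real m - 1) ^ d / real n ^ d = (1 / real m - 1 / real n) ^ d"
      using npos mpos by (simp add: power_divide[symmetric] diff_divide_distrib)
    have e2: "(real n / real m + 1) ^ d / real n ^ d = (1 / real m + 1 / real n) ^ d"
      using npos mpos by (simp add: power_divide[symmetric] add_divide_distrib)
    have "real (card G) * (1 / real m - 1 / real n) ^ d = real (card G) * ((real n / real m - 1) ^ d / real n ^ d)"
      by (simp only: e1)
    also have "\<dots> = real (card G) * (real n / real m - 1) ^ d / real n ^ d" by simp
    also have "\<dots> \<le> real (card (latS d J a c n)) / real n ^ d"
      using divide_right_mono[OF low, of "real n ^ d"] by simp
    finally have L1: "real (card G) * (1 / real m - 1 / real n) ^ d \<le> real (card (latS d J a c n)) / real n ^ d" .
    have "real (card (latS d J a c n)) / real n ^ d \<le> real (card M) * (real n / real m + 1) ^ d / real n ^ d"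
      using divide_right_mono[OF up, of "real n ^ d"] by simp
    also have "\<dots> = real (card M) * ((real n / real m + 1) ^ d / real n ^ d)" by simp
    also have "\<dots> = real (card M) * (1 / real m + 1 / real n) ^ d" by (simp only: e2)
    finally have L2: "real (card (latS d J a c n)) / real n ^ d \<le> real (card M) * (1 / real m + 1 / real n) ^ d" .
    show ?case using L1 L2 elim(3,4) MGb unfolding Lo_def by linarith
  qed
  then show "\<exists>Lo. eventually (\<lambda>n. Lo \<le> real (card (latS d J a c n)) / real n ^ d \<and>
                        real (card (latS d J a c n)) / real n ^ d \<le> Lo + \<eta>) sequentially" by blast
qed



lemma word_letters:
  assumes "is_word w"
  shows "set w = {0..<card (set w)}"
proof -
  have "\<forall>i\<le>length w. set (take i w) = {0..<card (set (take i w))}"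
  proof (intro allI impI)
    fix i assume "i \<le> length w"
    then show "set (take i w) = {0..<card (set (take i w))}"
    proof (induction i)
      case 0 then show ?case by simp
    next
      case (Suc i)
      then have i: "i < length w" by simp
      have IH: "set (take i w) = {0..<card (set (take i w))}" using Suc by simp
      have t: "take (Suc i) w = take i w @ [w ! i]" using i by (simp add: take_Suc_conv_app_nth)
      have le: "w ! i \<le> card (set (take i w))" using assms i by (simp add: is_word_def)
      show ?case
      proof (cases "w ! i < card (set (take i w))")
        case True
        then have "w ! i \<in> set (take i w)" by (subst IH) simp
        then have "set (take (Suc i) w) = set (take i w)" using t by auto
        then show ?thesis using IH by simp
      next
        case False
        then have e: "w ! i = card (set (take i w))" using le by simp
        then have "w ! i \<notin> set (take i w)" by (subst IH) simp
        then have "card (set (take (Suc i) w)) = Suc (card (set (take i w)))" using t by simp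
        moreover have "set (take (Suc i) w) = insert (w ! i) (set (take i w))" using t by simp
        moreover have "insert (w ! i) (set (take i w)) = {0..<Suc (card (set (take i w)))}"
          using e by (subst IH) auto
        ultimately show ?thesis by simp
      qed
    qed
  qed
  then show ?thesis by (metis order_refl take_all)
qed

definition sg :: "nat \<Rightarrow> int" where
  "sg l = (if odd l then -1 else 1)"

definition V :: "nat list \<Rightarrow> (nat \<Rightarrow> int) \<Rightarrow> nat \<Rightarrow> int" where
  "V w z i = z 0 + (\<Sum>l\<in>{1..i}. sg l * z (w ! (l - 1) + 1))"

lemma V_0 [simp]: "V w z 0 = z 0"
  by (simp add: V_def)

lemma V_Suc: "V w z (Suc i) = V w z i + sg (Suc i) * z (w ! i + 1)"
  by (simp add: V_def)

lemma V_step: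
  assumes "1 \<le> j"
  shows "V w z j = V w z (j - 1) + sg j * z (w ! (j - 1) + 1)"
  using V_Suc[of w z "j - 1"] assms by simp


definition Rg :: "nat \<Rightarrow> nat \<Rightarrow> nat \<Rightarrow> int" where
  "Rg p n i = int (if even i then p else n)"

definition Tset :: "nat list \<Rightarrow> nat \<Rightarrow> nat \<Rightarrow> (nat \<Rightarrow> int) set" where
  "Tset w p n = {z \<in> lat (card (set w) + 1).
     (\<forall>i \<le> length w. 1 \<le> V w z i \<and> V w z i \<le> Rg p n i) \<and> V w z (length w) = z 0}"

definition Tdist :: "nat list \<Rightarrow> nat \<Rightarrow> nat \<Rightarrow> (nat \<Rightarrow> int) set" where
  "Tdist w p n = {z \<in> Tset w p n. \<forall>a < card (set w). \<forall>a' < card (set w). a \<noteq> a' \<longrightarrow> z (a+1) \<noteq> z (a'+1)}"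

lemma sg_sq: "sg l * sg l = 1" by (simp add: sg_def)

lemma xi_LT_odd: "odd j \<Longrightarrow> xi L_T \<pi> j = int (\<pi> ! (j - 1)) - int (\<pi> ! j)"
  by (simp add: xi_def L_T_def)

lemma xi_LT_even: "even j \<Longrightarrow> xi L_T \<pi> j = int (\<pi> ! j) - int (\<pi> ! (j - 1))"
  by (simp add: xi_def L_T_def)

lemma xi_LT_V:
  assumes "1 \<le> j" "\<And>i. i \<le> j \<Longrightarrow> int (\<pi> ! i) = V w z i"
  shows "xi L_T \<pi> j = z (w ! (j - 1) + 1)"
proof -
  have a: "int (\<pi> ! j) = V w z j" "int (\<pi> ! (j - 1)) = V w z (j - 1)" using assms(2) by auto
  have s: "V w z j = V w z (j - 1) + sg j * z (w ! (j - 1) + 1)" by (rule V_step[OF assms(1)])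
  show ?thesis
  proof (cases "odd j")
    case True
    then show ?thesis using xi_LT_odd[OF True, of \<pi>] a s by (simp add: sg_def)
  next
    case False
    then show ?thesis using xi_LT_even[of j \<pi>] a s by (simp add: sg_def)
  qed
qed

lemma letter_pos:
  assumes "a \<in> set w"
  shows "\<exists>l. 1 \<le> l \<and> l \<le> length w \<and> w ! (l - 1) = a"
proof -
  obtain i where "i < length w" "w ! i = a" using assms by (auto simp: in_set_conv_nth)
  then show ?thesis by (intro exI[of _ "Suc i"]) simp
qed

lemma V_determines:
  assumes "is_word w" "z \<in> lat (card (set w) + 1)" "z' \<in> lat (card (set w) + 1)"
    and "\<And>i. i \<le> length w \<Longrightarrow> V w z i = V w z' i"
  shows "z = z'"
proof (rule ext)
  fix c
  show "z c = z' c"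
  proof (cases "c = 0")
    case True then show ?thesis using assms(4)[of 0] by simp
  next
    case False
    show ?thesis
    proof (cases "c < card (set w) + 1")
      case True
      then have "c - 1 < card (set w)" using False by simp
      then have "c - 1 \<in> set w" by (subst word_letters[OF assms(1)]) simp
      then obtain l where l: "1 \<le> l" "l \<le> length w" "w ! (l - 1) = c - 1" using letter_pos by metis
      have cc: "w ! (l - 1) + 1 = c" using l(3) False by simp
      have "V w z l = V w z (l - 1) + sg l * z c" "V w z' l = V w z' (l - 1) + sg l * z' c"
        using V_step[OF l(1), of w z] V_step[OF l(1), of w z'] unfolding cc by simp_all
      moreover have "V w z l = V w z' l" "V w z (l - 1) = V w z' (l - 1)" using assms(4) l(2) by auto
      ultimately have "sg l * z c = sg l * z' c" by linarith
      moreover have "sg l \<noteq> 0" by (simp add: sg_def)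
      ultimately show ?thesis by simp
    next
      case False
      then have "c \<notin> {..<card (set w) + 1}" by simp
      moreover have "z \<in> extensional {..<card (set w) + 1}" "z' \<in> extensional {..<card (set w) + 1}"
        using assms(2,3) unfolding lat_def by (simp_all add: PiE_def)
      ultimately show ?thesis by (simp add: extensional_def)
    qed
  qed
qed

lemma card_Pi_S:
  assumes w: "is_word w" and len: "length w = 2 * k"
  shows "card (Pi_S L_T p n k w) = card (Tdist w p n)"
proof -
  define b where "b = card (set w)"
  have setw: "set w = {0..<b}" unfolding b_def by (rule word_letters[OF w])
  define F where "F z = map (\<lambda>i. nat (V w z i)) [0..<2*k+1]" for z
  have Fnth: "F z ! i = nat (V w z i)" if "i \<le> 2*k" for z i
    using that by (simp add: F_def nth_append del: upt_Suc)
  have FV: "int (F z ! i) = V w z i" if "z \<in> Tdist w p n" "i \<le> 2*k" for z i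
  proof -
    have "1 \<le> V w z i" using that len by (simp add: Tdist_def Tset_def)
    then show ?thesis using Fnth[OF that(2)] by simp
  qed
  have inj: "inj_on F (Tdist w p n)"
  proof (rule inj_onI)
    fix z z' assume z: "z \<in> Tdist w p n" and z': "z' \<in> Tdist w p n" and e: "F z = F z'"
    show "z = z'"
    proof (rule V_determines[OF w])
      show "z \<in> lat (card (set w) + 1)" "z' \<in> lat (card (set w) + 1)" using z z' by (simp_all add: Tdist_def Tset_def)
      fix i assume "i \<le> length w"
      then show "V w z i = V w z' i" using FV[OF z, of i] FV[OF z', of i] e len by simp
    qed
  qed
  have into: "F ` Tdist w p n \<subseteq> Pi_S L_T p n k w"
  proof
    fix \<pi> assume "\<pi> \<in> F ` Tdist w p n"
    then obtain z where z: "z \<in> Tdist w p n" and \<pi>: "\<pi> = F z" by blast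
    have zT: "\<forall>i \<le> length w. 1 \<le> V w z i \<and> V w z i \<le> Rg p n i" "V w z (length w) = z 0"
      using z by (simp_all add: Tdist_def Tset_def)
    have zd: "\<forall>a < b. \<forall>a' < b. a \<noteq> a' \<longrightarrow> z (a+1) \<noteq> z (a'+1)" using z by (simp add: Tdist_def b_def)
    have pv: "int (\<pi> ! i) = V w z i" if "i \<le> 2*k" for i using FV[OF z that] \<pi> by simp
    have xiv: "xi L_T \<pi> j = z (w ! (j - 1) + 1)" if "j \<in> {1..2*k}" for j
      using that by (intro xi_LT_V) (auto intro: pv)
    have circ: "\<pi> \<in> circuits p n k"
    proof -
      have "length \<pi> = 2*k+1" by (simp add: \<pi> F_def)
      moreover have "\<pi> ! 0 = \<pi> ! (2*k)"
        using pv[of 0] pv[of "2*k"] zT(2) len by simp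
      moreover have "1 \<le> \<pi> ! (2*i) \<and> \<pi> ! (2*i) \<le> p" if "i \<le> k" for i
      proof -
        have "1 \<le> V w z (2*i) \<and> V w z (2*i) \<le> Rg p n (2*i)" using zT(1) that len by auto
        then show ?thesis using pv[of "2*i"] that by (auto simp: Rg_def)
      qed
      moreover have "1 \<le> \<pi> ! (2*i - 1) \<and> \<pi> ! (2*i - 1) \<le> n" if "i \<in> {1..k}" for i
      proof -
        have o: "odd (2*i - 1)" using that by simp
        have "1 \<le> V w z (2*i-1) \<and> V w z (2*i-1) \<le> Rg p n (2*i-1)" using zT(1) that len by auto
        moreover have "int (\<pi> ! (2*i-1)) = V w z (2*i-1)" using that by (intro pv) auto
        ultimately show ?thesis using o by (auto simp: Rg_def)
      qed
      ultimately show ?thesis by (simp add: circuits_def)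
    qed
    have "(w ! (i - 1) = w ! (j - 1) \<longleftrightarrow> xi L_T \<pi> i = xi L_T \<pi> j)" if "i \<in> {1..2*k}" "j \<in> {1..2*k}" for i j
    proof -
      have "i - 1 < length w" "j - 1 < length w" using that len by auto
      then have "w ! (i - 1) \<in> set w" "w ! (j - 1) \<in> set w" by (auto intro!: nth_mem)
      then have "w ! (i - 1) < b" "w ! (j - 1) < b" using setw by auto
      then show ?thesis using xiv[OF that(1)] xiv[OF that(2)] zd by auto
    qed
    then show "\<pi> \<in> Pi_S L_T p n k w" using circ by (simp add: Pi_S_def)
  qed
  have onto: "Pi_S L_T p n k w \<subseteq> F ` Tdist w p n"
  proof
    fix \<pi> assume \<pi>: "\<pi> \<in> Pi_S L_T p n k w"
    have circ: "\<pi> \<in> circuits p n k" and cond: "\<forall>i \<in> {1..2 * k}. \<forall>j \<in> {1..2 * k}. (w ! (i - 1) = w ! (j - 1) \<longleftrightarrow> xi L_T \<pi> i = xi L_T \<pi> j)"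
      using \<pi> by (simp_all add: Pi_S_def)
    have lenp: "length \<pi> = 2*k+1" using circ by (simp add: circuits_def)
    define pos where "pos a = (SOME l. 1 \<le> l \<and> l \<le> length w \<and> w ! (l - 1) = a)" for a
    have pos: "1 \<le> pos a \<and> pos a \<le> length w \<and> w ! (pos a - 1) = a" if "a \<in> set w" for a
      unfolding pos_def by (rule someI_ex) (rule letter_pos[OF that])
    define z where "z = restrict (\<lambda>c. if c = 0 then int (\<pi> ! 0) else xi L_T \<pi> (pos (c - 1))) {..<b+1}"
    have zl: "z \<in> lat (b+1)" by (simp add: z_def lat_def)
    have zlet: "z (w ! (l - 1) + 1) = xi L_T \<pi> l" if "l \<in> {1..2*k}" for l
    proof -
      have "w ! (l - 1) \<in> set w" using that len by (auto intro!: nth_mem)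
      then have inw: "w ! (l - 1) < b" and ps: "1 \<le> pos (w ! (l - 1)) \<and> pos (w ! (l - 1)) \<le> length w \<and> w ! (pos (w ! (l - 1)) - 1) = w ! (l - 1)"
        using setw pos by auto
      have "z (w ! (l - 1) + 1) = xi L_T \<pi> (pos (w ! (l - 1)))" using inw by (simp add: z_def)
      also have "\<dots> = xi L_T \<pi> l"
      proof -
        have "pos (w ! (l - 1)) \<in> {1..2*k}" using ps len by simp
        then show ?thesis using cond[rule_format, of "pos (w ! (l - 1))" l] ps that by simp
      qed
      finally show ?thesis .
    qed
    have Vp: "V w z i = int (\<pi> ! i)" if "i \<le> 2*k" for i
      using that
    proof (induction i)
      case 0 then show ?case by (simp add: z_def)
    next
      case (Suc i)
      have "V w z (Suc i) = V w z i + sg (Suc i) * z (w ! i + 1)" by (rule V_Suc)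
      also have "z (w ! i + 1) = xi L_T \<pi> (Suc i)" using zlet[of "Suc i"] Suc.prems by simp
      finally show ?case using Suc by (cases "odd (Suc i)") (simp_all add: sg_def xi_LT_odd xi_LT_even)
    qed
    have "F z = \<pi>"
    proof (rule nth_equalityI)
      show "length (F z) = length \<pi>" using lenp by (simp add: F_def)
      fix i assume "i < length (F z)"
      then have i: "i \<le> 2*k" by (simp add: F_def)
      show "F z ! i = \<pi> ! i" using Fnth[OF i] Vp[OF i] by simp
    qed
    moreover have "z \<in> Tdist w p n"
    proof -
      have r: "1 \<le> V w z i \<and> V w z i \<le> Rg p n i" if "i \<le> length w" for i
      proof (cases "even i")
        case True
        define h where "h = i div 2"
        have h: "i = 2*h" using True by (simp add: h_def)
        then have "h \<le> k" using that len by simp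
        then have "1 \<le> \<pi> ! (2*h) \<and> \<pi> ! (2*h) \<le> p" using circ by (simp add: circuits_def)
        then show ?thesis using Vp[of i] h that len True by (simp add: Rg_def)
      next
        case False
        define h where "h = i div 2"
        have h: "i = 2*h + 1" using False by (simp add: h_def)
        then have "Suc h \<in> {1..k}" using that len by simp
        then have "1 \<le> \<pi> ! (2*Suc h - 1) \<and> \<pi> ! (2*Suc h - 1) \<le> n" using circ by (simp add: circuits_def del: mult_Suc_right)
        moreover have "2*Suc h - 1 = i" using h by simp
        ultimately show ?thesis using Vp[of i] that len False by (simp add: Rg_def)
      qed
      have cl: "V w z (length w) = z 0"
        using Vp[of "2*k"] len circ by (simp add: circuits_def z_def)
      have dd: "z (a+1) \<noteq> z (a'+1)" if "a < b" "a' < b" "a \<noteq> a'" for a a'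
      proof -
        have ia: "a \<in> set w" "a' \<in> set w" using that setw by auto
        have za: "z (a+1) = xi L_T \<pi> (pos a)" "z (a'+1) = xi L_T \<pi> (pos a')" using that by (simp_all add: z_def)
        have "pos a \<in> {1..2*k}" "pos a' \<in> {1..2*k}" "w ! (pos a - 1) \<noteq> w ! (pos a' - 1)"
          using pos[OF ia(1)] pos[OF ia(2)] that len by auto
        then show ?thesis using cond[rule_format, of "pos a" "pos a'"] za by simp
      qed
      have zT: "z \<in> Tset w p n" unfolding Tset_def b_def[symmetric] using zl r cl by blast
      show ?thesis unfolding Tdist_def b_def[symmetric] using zT dd by blast
    qed
    ultimately show "\<pi> \<in> F ` Tdist w p n" by blast
  qed
  have "bij_betw F (Tdist w p n) (Pi_S L_T p n k w)"
    unfolding bij_betw_def using inj into onto by blast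
  then show ?thesis by (simp add: bij_betw_same_card)
qed


definition ecoef :: "nat list \<Rightarrow> nat \<Rightarrow> int" where
  "ecoef w a = (\<Sum>l\<in>{1..length w}. if w ! (l - 1) = a then sg l else 0)"

lemma V_letters:
  assumes "is_word w" "i \<le> length w"
  shows "V w z i = z 0 + (\<Sum>a<card (set w). (\<Sum>l\<in>{1..i}. if w ! (l - 1) = a then sg l else 0) * z (a + 1))"
proof -
  have lt: "w ! (l - 1) < card (set w)" if "l \<in> {1..i}" for l
  proof -
    have "w ! (l - 1) \<in> set w" using that assms(2) by (auto intro!: nth_mem)
    then show ?thesis by (subst (asm) word_letters[OF assms(1)]) simp
  qed
  have "(\<Sum>a<card (set w). (\<Sum>l\<in>{1..i}. if w ! (l - 1) = a then sg l else 0) * z (a + 1))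
      = (\<Sum>a<card (set w). \<Sum>l\<in>{1..i}. if w ! (l - 1) = a then sg l * z (w ! (l - 1) + 1) else 0)"
    by (intro sum.cong refl) (auto simp: sum_distrib_right intro!: sum.cong)
  also have "\<dots> = (\<Sum>l\<in>{1..i}. \<Sum>a<card (set w). if w ! (l - 1) = a then sg l * z (w ! (l - 1) + 1) else 0)"
    by (rule sum.swap)
  also have "\<dots> = (\<Sum>l\<in>{1..i}. sg l * z (w ! (l - 1) + 1))"
  proof (rule sum.cong)
    fix l assume "l \<in> {1..i}"
    then have "w ! (l - 1) \<in> {..<card (set w)}" using lt by simp
    then show "(\<Sum>a<card (set w). if w ! (l - 1) = a then sg l * z (w ! (l - 1) + 1) else 0) = sg l * z (w ! (l - 1) + 1)"
      by (simp add: sum.delta)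
  qed simp
  finally show ?thesis by (simp add: V_def)
qed

lemma closure_formula:
  assumes "is_word w"
  shows "V w z (length w) = z 0 + (\<Sum>a<card (set w). ecoef w a * z (a + 1))"
  using V_letters[OF assms order_refl] by (simp add: ecoef_def)

lemma ecoef_card:
  "ecoef w a = int (card {l \<in> {1..length w}. even l \<and> w ! (l - 1) = a}) - int (card {l \<in> {1..length w}. odd l \<and> w ! (l - 1) = a})"
proof -
  have "ecoef w a = (\<Sum>l\<in>{l \<in> {1..length w}. w ! (l - 1) = a}. sg l)"
    unfolding ecoef_def by (rule sum.inter_filter[symmetric]) simp
  also have "\<dots> = (\<Sum>l\<in>{l \<in> {1..length w}. w ! (l - 1) = a} \<inter> {l. odd l}. -1) + (\<Sum>l\<in>{l \<in> {1..length w}. w ! (l - 1) = a} \<inter> - {l. odd l}. 1)"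
    unfolding sg_def by (rule sum.If_cases) simp
  also have "{l \<in> {1..length w}. w ! (l - 1) = a} \<inter> {l. odd l} = {l \<in> {1..length w}. odd l \<and> w ! (l - 1) = a}" by auto
  also have "{l \<in> {1..length w}. w ! (l - 1) = a} \<inter> - {l. odd l} = {l \<in> {1..length w}. even l \<and> w ! (l - 1) = a}" by auto
  finally show ?thesis by simp
qed

lemma symmetric_iff_ecoef:
  assumes "is_word w"
  shows "symmetric_word w \<longleftrightarrow> (\<forall>a<card (set w). ecoef w a = 0)"
proof
  assume s: "symmetric_word w"
  show "\<forall>a<card (set w). ecoef w a = 0"
  proof (intro allI impI)
    fix a assume "a < card (set w)"
    then have "a \<in> set w" by (subst word_letters[OF assms]) simp
    then show "ecoef w a = 0" using s by (simp add: symmetric_word_def ecoef_card)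
  qed
next
  assume e: "\<forall>a<card (set w). ecoef w a = 0"
  show "symmetric_word w" unfolding symmetric_word_def
  proof
    fix a assume "a \<in> set w"
    then have "a < card (set w)" by (subst (asm) word_letters[OF assms]) simp
    then have "ecoef w a = 0" using e by blast
    then show "card {i \<in> {1..length w}. odd i \<and> w ! (i - 1) = a} = card {i \<in> {1..length w}. even i \<and> w ! (i - 1) = a}"
      by (simp add: ecoef_card)
  qed
qed


lemma Tset_bound:
  assumes w: "is_word w" and z: "z \<in> Tset w p n" and c: "c < card (set w) + 1"
  shows "\<bar>z c\<bar> \<le> int (p + n)"
proof -
  have r: "1 \<le> V w z i \<and> V w z i \<le> int (p + n)" if "i \<le> length w" for i
  proof -
    have "1 \<le> V w z i \<and> V w z i \<le> Rg p n i" using z that by (simp add: Tset_def)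
    moreover have "Rg p n i \<le> int (p + n)" by (simp add: Rg_def)
    ultimately show ?thesis by linarith
  qed
  show ?thesis
  proof (cases "c = 0")
    case True
    then show ?thesis using r[of 0] by simp
  next
    case False
    then have "c - 1 < card (set w)" using c by simp
    then have "c - 1 \<in> set w" by (subst word_letters[OF w]) simp
    then obtain l where l: "1 \<le> l" "l \<le> length w" "w ! (l - 1) = c - 1" using letter_pos by metis
    have cc: "w ! (l - 1) + 1 = c" using l(3) False by simp
    have e: "V w z l = V w z (l - 1) + sg l * z c" using V_step[OF l(1), of w z] unfolding cc .
    have "\<bar>sg l * z c\<bar> = \<bar>z c\<bar>" by (simp add: sg_def abs_mult)
    moreover have "\<bar>sg l * z c\<bar> \<le> int (p + n)"
    proof -
      have r1: "1 \<le> V w z l \<and> V w z l \<le> int (p + n)" using r[OF l(2)] .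
      have r2: "1 \<le> V w z (l - 1) \<and> V w z (l - 1) \<le> int (p + n)" using r[of "l - 1"] l(2) by simp
      have "sg l * z c \<le> int (p + n)" "- (sg l * z c) \<le> int (p + n)" using e r1 r2 by linarith+
      then show ?thesis by (rule abs_leI)
    qed
    ultimately show ?thesis by simp
  qed
qed

lemma Tset_box:
  assumes w: "is_word w"
  shows "Tset w p n \<subseteq> PiE {..<card (set w) + 1} (\<lambda>_. {- int (p + n)..int (p + n)})"
proof
  fix z assume z: "z \<in> Tset w p n"
  then have "z \<in> lat (card (set w) + 1)" by (simp add: Tset_def)
  moreover have "\<forall>c<card (set w) + 1. z c \<in> {- int (p + n)..int (p + n)}"
  proof (intro allI impI)
    fix c assume "c < card (set w) + 1"
    then have a: "\<bar>z c\<bar> \<le> int (p + n)" by (rule Tset_bound[OF w z])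
    have "z c \<le> int (p + n)" "- z c \<le> int (p + n)" using abs_le_D1[OF a] abs_le_D2[OF a] .
    then show "z c \<in> {- int (p + n)..int (p + n)}" by simp
  qed
  ultimately show "z \<in> PiE {..<card (set w) + 1} (\<lambda>_. {- int (p + n)..int (p + n)})"
    by (auto simp: lat_def PiE_iff)
qed

lemma Tset_finite: "is_word w \<Longrightarrow> finite (Tset w p n)"
  by (rule finite_subset[OF Tset_box]) (simp_all add: finite_PiE)

lemma card_proj_le:
  fixes X :: "('a \<Rightarrow> 'b) set"
  assumes "finite I" "finite S" "c \<in> I" "X \<subseteq> PiE I (\<lambda>_. S)"
    and "\<And>z z'. z \<in> X \<Longrightarrow> z' \<in> X \<Longrightarrow> (\<forall>i\<in>I - {c}. z i = z' i) \<Longrightarrow> z = z'"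
  shows "card X \<le> card S ^ (card I - 1)"
proof -
  have inj: "inj_on (\<lambda>z. restrict z (I - {c})) X"
  proof (rule inj_onI)
    fix z z' assume "z \<in> X" "z' \<in> X" "restrict z (I - {c}) = restrict z' (I - {c})"
    then show "z = z'" using assms(5) by (metis restrict_apply')
  qed
  have img: "(\<lambda>z. restrict z (I - {c})) ` X \<subseteq> PiE (I - {c}) (\<lambda>_. S)"
  proof
    fix v assume "v \<in> (\<lambda>z. restrict z (I - {c})) ` X"
    then obtain z where z: "z \<in> X" "v = restrict z (I - {c})" by blast
    have "z \<in> PiE I (\<lambda>_. S)" using z(1) assms(4) by blast
    then have "\<forall>i\<in>I - {c}. z i \<in> S" by (auto simp: PiE_iff)
    then show "v \<in> PiE (I - {c}) (\<lambda>_. S)" unfolding z(2) by (simp add: restrict_PiE_iff)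
  qed
  have "card X \<le> card (PiE (I - {c}) (\<lambda>_. S))"
    by (rule card_inj_on_le[OF inj img]) (simp add: finite_PiE assms(1,2))
  also have "\<dots> = card S ^ (card I - 1)"
    using assms(1,3) by (simp add: card_PiE)
  finally show ?thesis .
qed

lemma dist_gap:
  assumes w: "is_word w"
  shows "card (Tset w p n) \<le> card (Tdist w p n) + card (set w) * card (set w) * nat (2 * int (p + n) + 1) ^ card (set w)"
proof -
  define b where "b = card (set w)"
  define M where "M = int (p + n)"
  define B where "B = PiE {..<b + 1} (\<lambda>_. {-M..M})"
  define Y where "Y a a' = {z \<in> B. z (a+1) = z (a'+1)}" for a a'
  have TB: "Tset w p n \<subseteq> B" using Tset_box[OF w] by (simp add: B_def M_def b_def)
  have fT: "finite (Tset w p n)" by (rule Tset_finite[OF w])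
  have sub: "Tset w p n - Tdist w p n \<subseteq> (\<Union>a\<in>{..<b}. \<Union>a'\<in>{..<b} - {a}. Y a a')"
  proof
    fix z assume "z \<in> Tset w p n - Tdist w p n"
    then have zT: "z \<in> Tset w p n" and nd: "\<not> (\<forall>a < b. \<forall>a' < b. a \<noteq> a' \<longrightarrow> z (a+1) \<noteq> z (a'+1))"
      by (auto simp: Tdist_def b_def)
    then obtain a a' where "a < b" "a' < b" "a \<noteq> a'" "z (a+1) = z (a'+1)" by blast
    then show "z \<in> (\<Union>a\<in>{..<b}. \<Union>a'\<in>{..<b} - {a}. Y a a')" using zT TB by (auto simp: Y_def)
  qed
  have cY: "card (Y a a') \<le> nat (2*M+1) ^ b" if "a < b" "a' < b" "a \<noteq> a'" for a a'
  proof -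
    have "card (Y a a') \<le> card {-M..M} ^ (card {..<b+1} - 1)"
    proof (rule card_proj_le[where c="a+1"])
      show "a + 1 \<in> {..<b+1}" using that by simp
      show "Y a a' \<subseteq> PiE {..<b+1} (\<lambda>_. {-M..M})" by (auto simp: Y_def B_def)
      fix z z' assume "z \<in> Y a a'" "z' \<in> Y a a'" and h: "\<forall>i\<in>{..<b+1} - {a+1}. z i = z' i"
      then have "z (a+1) = z (a'+1)" "z' (a+1) = z' (a'+1)" "z (a'+1) = z' (a'+1)"
        using that by (auto simp: Y_def)
      then have "\<forall>i\<in>{..<b+1}. z i = z' i" using h by auto
      moreover have "z \<in> extensional {..<b+1}" "z' \<in> extensional {..<b+1}"
        using \<open>z \<in> Y a a'\<close> \<open>z' \<in> Y a a'\<close> by (auto simp: Y_def B_def PiE_def)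
      ultimately show "z = z'" using extensionalityI[of z "{..<b+1}" z'] by blast
    qed simp_all
    then show ?thesis by simp
  qed
  have fY: "finite (Y a a')" for a a' by (rule finite_subset[of _ B]) (auto simp: Y_def B_def finite_PiE)
  have "card (Tset w p n - Tdist w p n) \<le> card (\<Union>a\<in>{..<b}. \<Union>a'\<in>{..<b} - {a}. Y a a')"
    by (rule card_mono[OF _ sub]) (simp add: fY)
  also have "\<dots> \<le> (\<Sum>a\<in>{..<b}. card (\<Union>a'\<in>{..<b} - {a}. Y a a'))" by (rule card_UN_le) simp
  also have "\<dots> \<le> (\<Sum>a\<in>{..<b}. \<Sum>a'\<in>{..<b} - {a}. card (Y a a'))"
    by (rule sum_mono) (rule card_UN_le, simp)
  also have "\<dots> \<le> (\<Sum>a\<in>{..<b}. \<Sum>a'\<in>{..<b} - {a}. nat (2*M+1) ^ b)"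
    by (intro sum_mono) (use cY in auto)
  also have "\<dots> \<le> (\<Sum>a\<in>{..<b}. \<Sum>a'\<in>{..<b}. nat (2*M+1) ^ b)"
    by (intro sum_mono sum_mono2) auto
  also have "\<dots> = b * b * nat (2*M+1) ^ b" by simp
  finally have g: "card (Tset w p n - Tdist w p n) \<le> b * b * nat (2*M+1) ^ b" .
  have "Tdist w p n \<subseteq> Tset w p n" by (auto simp: Tdist_def)
  then have "card (Tset w p n) = card (Tdist w p n) + card (Tset w p n - Tdist w p n)"
    using fT by (metis card_Diff_subset card_mono finite_subset le_add_diff_inverse)
  then show ?thesis using g by (simp add: b_def M_def)
qed

lemma nonsym_bound:
  assumes w: "is_word w" and a0: "a0 < card (set w)" "ecoef w a0 \<noteq> 0"
  shows "card (Tset w p n) \<le> nat (2 * int (p + n) + 1) ^ card (set w)"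
proof -
  define b where "b = card (set w)"
  define M where "M = int (p + n)"
  have "card (Tset w p n) \<le> card {-M..M} ^ (card {..<b+1} - 1)"
  proof (rule card_proj_le[where c="a0+1"])
    show "a0 + 1 \<in> {..<b+1}" using a0 by (simp add: b_def)
    show "Tset w p n \<subseteq> PiE {..<b+1} (\<lambda>_. {-M..M})" using Tset_box[OF w] by (simp add: b_def M_def)
    fix z z' assume z: "z \<in> Tset w p n" and z': "z' \<in> Tset w p n" and h: "\<forall>i\<in>{..<b+1} - {a0+1}. z i = z' i"
    have s0: "(\<Sum>a<b. ecoef w a * z (a + 1)) = 0" "(\<Sum>a<b. ecoef w a * z' (a + 1)) = 0"
      using closure_formula[OF w, of z] closure_formula[OF w, of z'] z z' by (simp_all add: Tset_def b_def)
    have "(\<Sum>a<b. ecoef w a * z (a + 1)) = ecoef w a0 * z (a0 + 1) + (\<Sum>a\<in>{..<b} - {a0}. ecoef w a * z (a + 1))"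
      using a0 by (subst sum.remove[of _ a0]) (simp_all add: b_def)
    moreover have "(\<Sum>a<b. ecoef w a * z' (a + 1)) = ecoef w a0 * z' (a0 + 1) + (\<Sum>a\<in>{..<b} - {a0}. ecoef w a * z' (a + 1))"
      using a0 by (subst sum.remove[of _ a0]) (simp_all add: b_def)
    moreover have "(\<Sum>a\<in>{..<b} - {a0}. ecoef w a * z (a + 1)) = (\<Sum>a\<in>{..<b} - {a0}. ecoef w a * z' (a + 1))"
      using h by (intro sum.cong) auto
    ultimately have "ecoef w a0 * z (a0 + 1) = ecoef w a0 * z' (a0 + 1)" using s0 by linarith
    then have "z (a0+1) = z' (a0+1)" using a0(2) by simp
    then have "\<forall>i\<in>{..<b+1}. z i = z' i" using h by auto
    moreover have "z \<in> extensional {..<b+1}" "z' \<in> extensional {..<b+1}"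
      using z z' by (auto simp: Tset_def lat_def PiE_def b_def)
    ultimately show "z = z'" using extensionalityI[of z "{..<b+1}" z'] by blast
  qed simp_all
  then show ?thesis by (simp add: b_def M_def)
qed


lemma sum_sg: "(\<Sum>l\<in>{1..i}. sg l) = (if odd i then -1 else 0)"
  by (induction i) (auto simp: sg_def)

lemma box_in_Tdist:
  fixes h :: nat and P2 N2 :: int
  assumes w: "is_word w" and sym: "\<forall>a<card (set w). ecoef w a = 0"
    and h: "1 \<le> h"
    and P: "2 * int (length w) * int (card (set w)) * int h + 1 \<le> P2"
           "P2 + int h + 2 * int (length w) * int (card (set w)) * int h \<le> int p"
    and N: "2 * int (length w) * int (card (set w)) * int h + 1 \<le> N2"
           "N2 + int h + 2 * int (length w) * int (card (set w)) * int h \<le> int n"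
  shows "h ^ (card (set w) + 1) \<le> card (Tdist w p n)"
proof -
  define b where "b = card (set w)"
  define L where "L = length w"
  define c0 where "c0 = P2 - N2"
  define D where "D = 2 * int L * int b * int h"
  define I where "I c = (if c = 0 then {P2..P2 + int h - 1} else {c0 + 2 * int (c - 1) * int h .. c0 + 2 * int (c - 1) * int h + int h - 1})" for c
  define B where "B = PiE {..<b+1} I"
  have setw: "set w = {0..<b}" unfolding b_def by (rule word_letters[OF w])
  have cardB: "card B = h ^ (b + 1)"
  proof -
    have "card (I c) = h" for c by (simp add: I_def)
    then show ?thesis by (simp add: B_def card_PiE)
  qed
  have let_lt: "w ! (l - 1) < b" if "l \<in> {1..L}" for l
  proof -
    have "w ! (l - 1) \<in> set w" using that by (auto simp: L_def intro!: nth_mem)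
    then show ?thesis using setw by simp
  qed
  have BT: "B \<subseteq> Tdist w p n"
  proof
    fix z assume zB: "z \<in> B"
    have zI: "z c \<in> I c" if "c < b + 1" for c using zB that by (auto simp: B_def PiE_iff)
    have z0: "P2 \<le> z 0" "z 0 \<le> P2 + int h - 1" using zI[of 0] by (simp_all add: I_def)
    define e where "e l = z (w ! (l - 1) + 1) - c0" for l
    have e: "0 \<le> e l \<and> e l \<le> 2 * int b * int h" if "l \<in> {1..L}" for l
    proof -
      have a: "w ! (l - 1) < b" by (rule let_lt[OF that])
      then have "z (w ! (l - 1) + 1) \<in> I (w ! (l - 1) + 1)" using zI by simp
      then have r: "c0 + 2 * int (w ! (l - 1)) * int h \<le> z (w ! (l - 1) + 1)"
        "z (w ! (l - 1) + 1) \<le> c0 + 2 * int (w ! (l - 1)) * int h + int h - 1" by (simp_all add: I_def)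
      have "int (w ! (l - 1)) + 1 \<le> int b" using a by simp
      then have "(int (w ! (l - 1)) + 1) * int h \<le> int b * int h" by (rule mult_right_mono) simp
      then have "2 * int (w ! (l - 1)) * int h + int h \<le> 2 * int b * int h" by (simp add: algebra_simps)
      moreover have "0 \<le> 2 * int (w ! (l - 1)) * int h" by simp
      ultimately have "0 \<le> e l" "e l \<le> 2 * int b * int h" using r unfolding e_def by linarith+
      then show ?thesis by simp
    qed
    have Vform: "V w z i = z 0 + c0 * (if odd i then -1 else 0) + (\<Sum>l\<in>{1..i}. sg l * e l)" for i
    proof -
      have "(\<Sum>l\<in>{1..i}. sg l * z (w ! (l - 1) + 1)) = (\<Sum>l\<in>{1..i}. c0 * sg l + sg l * e l)"
        by (intro sum.cong) (simp_all add: e_def algebra_simps)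
      also have "\<dots> = c0 * (\<Sum>l\<in>{1..i}. sg l) + (\<Sum>l\<in>{1..i}. sg l * e l)"
        by (simp add: sum.distrib sum_distrib_left)
      also have "c0 * (\<Sum>l\<in>{1..i}. sg l) = c0 * (if odd i then -1 else 0)" by (simp only: sum_sg)
      finally show ?thesis unfolding V_def by simp
    qed
    have dev: "\<bar>\<Sum>l\<in>{1..i}. sg l * e l\<bar> \<le> D" if "i \<le> L" for i
    proof -
      have "\<bar>\<Sum>l\<in>{1..i}. sg l * e l\<bar> \<le> (\<Sum>l\<in>{1..i}. \<bar>sg l * e l\<bar>)" by (rule sum_abs)
      also have "\<dots> \<le> (\<Sum>l\<in>{1..i}. 2 * int b * int h)"
      proof (rule sum_mono)
        fix l assume "l \<in> {1..i}"
        then have "l \<in> {1..L}" using that by simp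
        then show "\<bar>sg l * e l\<bar> \<le> 2 * int b * int h" using e by (simp add: sg_def abs_mult)
      qed
      also have "\<dots> = int i * (2 * int b * int h)" by simp
      also have "\<dots> \<le> int L * (2 * int b * int h)" using that by (intro mult_right_mono) simp_all
      finally show ?thesis by (simp add: D_def algebra_simps)
    qed
    have rng: "1 \<le> V w z i \<and> V w z i \<le> Rg p n i" if "i \<le> length w" for i
    proof -
      have d: "- D \<le> (\<Sum>l\<in>{1..i}. sg l * e l)" "(\<Sum>l\<in>{1..i}. sg l * e l) \<le> D"
        using dev[of i] that by (simp_all add: L_def abs_le_iff)
      show ?thesis
      proof (cases "odd i")
        case True
        then show ?thesis using Vform[of i] d z0 N by (simp add: Rg_def c0_def D_def L_def b_def)
      next
        case False
        then show ?thesis using Vform[of i] d z0 P by (simp add: Rg_def D_def L_def b_def)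
      qed
    qed
    have cl: "V w z (length w) = z 0"
      using closure_formula[OF w, of z] sym by simp
    have dd: "z (a+1) \<noteq> z (a'+1)" if "a < b" "a' < b" "a \<noteq> a'" for a a'
    proof -
      have ra: "c0 + 2 * int a * int h \<le> z (a+1)" "z (a+1) \<le> c0 + 2 * int a * int h + int h - 1"
        using zI[of "a+1"] that by (simp_all add: I_def)
      have ra': "c0 + 2 * int a' * int h \<le> z (a'+1)" "z (a'+1) \<le> c0 + 2 * int a' * int h + int h - 1"
        using zI[of "a'+1"] that by (simp_all add: I_def)
      show ?thesis
      proof (cases "a < a'")
        case True
        then have "(int a + 1) * int h \<le> int a' * int h" by (intro mult_right_mono) simp_all
        then show ?thesis using ra ra' by (simp add: algebra_simps)
      next
        case False
        then have "a' < a" using that by simp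
        then have "(int a' + 1) * int h \<le> int a * int h" by (intro mult_right_mono) simp_all
        then show ?thesis using ra ra' by (simp add: algebra_simps)
      qed
    qed
    have zl: "z \<in> lat (card (set w) + 1)"
      using zB unfolding B_def lat_def b_def by (auto simp: PiE_iff)
    have zT: "z \<in> Tset w p n" unfolding Tset_def using zl rng cl by blast
    show "z \<in> Tdist w p n" unfolding Tdist_def b_def[symmetric] using zT dd by blast
  qed
  have "card B \<le> card (Tdist w p n)"
    by (rule card_mono[OF _ BT]) (rule finite_subset[OF _ Tset_finite[OF w]], auto simp: Tdist_def)
  then show ?thesis using cardB by (simp add: b_def)
qed


lemma r_le_b:
  "card {i \<in> {1..length w}. even i \<and> first_occ w i} \<le> card (set w)"
proof -
  define E where "E = {i \<in> {1..length w}. even i \<and> first_occ w i}"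
  have inj: "inj_on (\<lambda>i. w ! (i - 1)) E"
  proof (rule inj_onI)
    fix i j assume i: "i \<in> E" and j: "j \<in> E" and e: "w ! (i - 1) = w ! (j - 1)"
    show "i = j"
    proof (rule ccontr)
      assume "i \<noteq> j"
      then consider "i < j" | "j < i" by linarith
      then show False
      proof cases
        case 1
        then have "i - 1 < j - 1" "i - 1 < length w" using i j by (auto simp: E_def)
        then have "w ! (i - 1) \<in> set (take (j - 1) w)" by (auto simp: in_set_conv_nth)
        then show False using j e by (simp add: E_def first_occ_def)
      next
        case 2
        then have "j - 1 < i - 1" "j - 1 < length w" using i j by (auto simp: E_def)
        then have "w ! (j - 1) \<in> set (take (i - 1) w)" by (auto simp: in_set_conv_nth)
        then show False using i e by (simp add: E_def first_occ_def)
      qed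
    qed
  qed
  have "(\<lambda>i. w ! (i - 1)) ` E \<subseteq> set w"
    by (auto simp: E_def intro!: nth_mem)
  then have "card E \<le> card (set w)" using card_inj_on_le[OF inj] by simp
  then show ?thesis by (simp add: E_def)
qed

definition alpha :: "nat list \<Rightarrow> nat \<Rightarrow> nat \<Rightarrow> int" where
  "alpha w i c = (if c = 0 then 1 else (\<Sum>l\<in>{1..i}. if w ! (l - 1) = c - 1 then sg l else 0))"

lemma dotp_alpha:
  assumes w: "is_word w" and i: "i \<le> length w"
  shows "dotp (card (set w) + 1) (alpha w i) z = V w z i"
proof -
  have "dotp (card (set w) + 1) (alpha w i) z = alpha w i 0 * z 0 + (\<Sum>a<card (set w). alpha w i (Suc a) * z (Suc a))"
    unfolding dotp_def by (simp del: sum.lessThan_Suc add: sum.lessThan_Suc_shift)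
  also have "\<dots> = V w z i" using V_letters[OF w i] by (simp add: alpha_def)
  finally show ?thesis .
qed

definition aJ :: "nat list \<Rightarrow> nat \<times> bool \<Rightarrow> nat \<Rightarrow> int" where
  "aJ w j = (if snd j then alpha w (fst j) else (\<lambda>c. - alpha w (fst j) c))"

definition cJ :: "(nat \<Rightarrow> nat) \<Rightarrow> nat \<times> bool \<Rightarrow> nat \<Rightarrow> real" where
  "cJ p j n = (if snd j then real_of_int (Rg (p n) n (fst j)) else -1)"

lemma Tset_latS:
  assumes w: "is_word w" and sym: "\<forall>a<card (set w). ecoef w a = 0"
  shows "Tset w (p n) n = latS (card (set w) + 1) ({..length w} \<times> UNIV) (aJ w) (cJ p) n"
proof -
  have dneg: "dotp d (\<lambda>c. - f c) z = - dotp d f z" for d f z by (simp add: dotp_def sum_negf)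
  have cl: "V w z (length w) = z 0" for z using closure_formula[OF w, of z] sym by simp
  have "z \<in> Tset w (p n) n \<longleftrightarrow> z \<in> latS (card (set w) + 1) ({..length w} \<times> UNIV) (aJ w) (cJ p) n" for z
  proof -
    have "(\<forall>j\<in>{..length w} \<times> UNIV. real_of_int (dotp (card (set w) + 1) (aJ w j) z) \<le> cJ p j n)
          \<longleftrightarrow> (\<forall>i \<le> length w. 1 \<le> V w z i \<and> V w z i \<le> Rg (p n) n i)"
    proof
      assume h: "\<forall>j\<in>{..length w} \<times> UNIV. real_of_int (dotp (card (set w) + 1) (aJ w j) z) \<le> cJ p j n"
      show "\<forall>i \<le> length w. 1 \<le> V w z i \<and> V w z i \<le> Rg (p n) n i"
      proof (intro allI impI)
        fix i assume i: "i \<le> length w"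
        have "real_of_int (dotp (card (set w) + 1) (aJ w (i, True)) z) \<le> cJ p (i, True) n"
             "real_of_int (dotp (card (set w) + 1) (aJ w (i, False)) z) \<le> cJ p (i, False) n"
          using h i by auto
        moreover have da: "dotp (Suc (card (set w))) (alpha w i) z = V w z i" using dotp_alpha[OF w i] by simp
        ultimately show "1 \<le> V w z i \<and> V w z i \<le> Rg (p n) n i"
          by (simp add: aJ_def cJ_def dneg)
      qed
    next
      assume h: "\<forall>i \<le> length w. 1 \<le> V w z i \<and> V w z i \<le> Rg (p n) n i"
      show "\<forall>j\<in>{..length w} \<times> UNIV. real_of_int (dotp (card (set w) + 1) (aJ w j) z) \<le> cJ p j n"
      proof
        fix j assume "j \<in> {..length w} \<times> (UNIV :: bool set)"
        then obtain i t where j: "j = (i, t)" "i \<le> length w" by auto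
        have da: "dotp (Suc (card (set w))) (alpha w i) z = V w z i" using dotp_alpha[OF w j(2)] by simp
        show "real_of_int (dotp (card (set w) + 1) (aJ w j) z) \<le> cJ p j n"
          using h j da by (cases t) (auto simp: aJ_def cJ_def dneg)
      qed
    qed
    then show ?thesis by (auto simp: Tset_def latS_def cl)
  qed
  then show ?thesis by blast
qed



lemma poly_over_n:
  assumes lim: "(\<lambda>n. real (p n) / real n) \<longlonglongrightarrow> y"
  shows "(\<lambda>n. (2 * real (p n) + 2 * real n + 1) ^ b / real n ^ (b + 1)) \<longlonglongrightarrow> 0"
proof -
  have t: "(\<lambda>n. (2 * (real (p n) / real n) + 2 + 1 / real n) ^ b * (1 / real n)) \<longlonglongrightarrow> (2 * y + 2 + 0) ^ b * 0"
    by (intro tendsto_intros lim lim_1_over_n)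
  have ev: "eventually (\<lambda>n. (2 * (real (p n) / real n) + 2 + 1 / real n) ^ b * (1 / real n)
              = (2 * real (p n) + 2 * real n + 1) ^ b / real n ^ (b + 1)) sequentially"
  proof (rule eventually_mono[OF eventually_gt_at_top[of 0]])
    fix n :: nat assume n: "0 < n"
    have "2 * (real (p n) / real n) + 2 + 1 / real n = (2 * real (p n) + 2 * real n + 1) / real n"
      using n by (simp add: field_simps)
    then show "(2 * (real (p n) / real n) + 2 + 1 / real n) ^ b * (1 / real n)
              = (2 * real (p n) + 2 * real n + 1) ^ b / real n ^ (b + 1)"
      by (simp add: power_divide)
  qed
  show ?thesis using Lim_transform_eventually[OF t ev] by simp
qed

lemma sym_conv:
  assumes w: "is_word w" and sym: "\<forall>a<card (set w). ecoef w a = 0"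
    and lim: "(\<lambda>n. real (p n) / real n) \<longlonglongrightarrow> y"
  shows "convergent (\<lambda>n. real (card (Tset w (p n) n)) / real n ^ (card (set w) + 1))"
proof -
  define J where "J = {..length w} \<times> (UNIV :: bool set)"
  define g where "g j = (if snd j then (if even (fst j) then y else 1) else 0)" for j :: "nat \<times> bool"
  have eq: "Tset w (p n) n = latS (card (set w) + 1) J (aJ w) (cJ p) n" for n
    unfolding J_def by (rule Tset_latS[OF w sym])
  have "convergent (\<lambda>n. real (card (latS (card (set w) + 1) J (aJ w) (cJ p) n)) / real n ^ (card (set w) + 1))"
  proof (rule lattice_convergent[where \<gamma>=g and C="y + 2"])
    show "finite J" by (simp add: J_def)
    show "0 < card (set w) + 1" by simp
    show "\<forall>j\<in>J. aJ w j 0 \<noteq> 0" by (simp add: aJ_def alpha_def)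
    show "\<forall>j\<in>J. (\<lambda>n. cJ p j n / real n) \<longlonglongrightarrow> g j"
    proof
      fix j :: "nat \<times> bool" assume "j \<in> J"
      show "(\<lambda>n. cJ p j n / real n) \<longlonglongrightarrow> g j"
      proof (cases "snd j")
        case True
        show ?thesis
        proof (cases "even (fst j)")
          case True
          then show ?thesis using \<open>snd j\<close> lim by (simp add: cJ_def g_def Rg_def)
        next
          case False
          have "(\<lambda>n. 1::real) \<longlonglongrightarrow> 1" by simp
          moreover have "eventually (\<lambda>n. 1 = cJ p j n / real n) sequentially"
            using eventually_gt_at_top[of 0] by eventually_elim (use \<open>snd j\<close> False in \<open>simp add: cJ_def Rg_def\<close>)
          ultimately have "(\<lambda>n. cJ p j n / real n) \<longlonglongrightarrow> 1" by (rule Lim_transform_eventually)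
          then show ?thesis using \<open>snd j\<close> False by (simp add: g_def)
        qed
      next
        case False
        have "(\<lambda>n. - (1 / real n)) \<longlonglongrightarrow> - 0" by (intro tendsto_intros lim_1_over_n)
        then show ?thesis using False by (simp add: cJ_def g_def)
      qed
    qed
    show "eventually (\<lambda>n. \<forall>z \<in> latS (card (set w) + 1) J (aJ w) (cJ p) n. \<forall>i<card (set w) + 1.
             \<bar>real_of_int (z i)\<bar> \<le> (y + 2) * real n) sequentially"
    proof -
      have "eventually (\<lambda>n. real (p n) / real n < y + 1) sequentially"
        using order_tendstoD(2)[OF lim, of "y + 1"] by simp
      then show ?thesis using eventually_gt_at_top[of 0]
      proof eventually_elim
        case (elim n)
        then have pn: "real (p n) \<le> (y + 1) * real n" by (simp add: divide_less_eq less_imp_le)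
        show ?case
        proof (intro ballI allI impI)
          fix z i assume z: "z \<in> latS (card (set w) + 1) J (aJ w) (cJ p) n" and i: "i < card (set w) + 1"
          have "z \<in> Tset w (p n) n" using z eq by simp
          then have "\<bar>z i\<bar> \<le> int (p n + n)" by (rule Tset_bound[OF w _ i])
          then have "\<bar>real_of_int (z i)\<bar> \<le> real (p n) + real n"
            by (metis of_int_abs of_int_le_iff of_int_of_nat_eq of_nat_add)
          then show "\<bar>real_of_int (z i)\<bar> \<le> (y + 2) * real n" using pn by (simp add: algebra_simps)
        qed
      qed
    qed
  qed
  then show ?thesis by (simp add: eq)
qed


lemma div_bounds:
  fixes n Q :: nat
  assumes "0 < Q"
  shows "real Q * real (n div Q) \<le> real n" "real n < real Q * (real (n div Q) + 1)"
proof -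
  have e: "n div Q * Q + n mod Q = n" by (rule div_mult_mod_eq)
  have m: "n mod Q < Q" using assms by simp
  have "real (n div Q * Q) + real (n mod Q) = real n" using e by (metis of_nat_add)
  then show "real Q * real (n div Q) \<le> real n" "real n < real Q * (real (n div Q) + 1)"
    using m by (simp_all add: algebra_simps)
qed

lemma pos_lower:
  assumes w: "is_word w" and sym: "\<forall>a<card (set w). ecoef w a = 0"
    and lim: "(\<lambda>n. real (p n) / real n) \<longlonglongrightarrow> y" and y: "0 < y"
  shows "\<exists>\<kappa>>0. eventually (\<lambda>n. \<kappa> \<le> real (card (Tdist w (p n) n)) / real n ^ (card (set w) + 1)) sequentially"
proof -
  define b where "b = card (set w)"
  define L where "L = length w"
  define K0 where "K0 = 2 * L * b"
  define Z :: nat where "Z = nat \<lceil>1 / y\<rceil> + 1"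
  have Zy: "1 \<le> real Z * y"
  proof -
    have "1 / y \<le> real Z" unfolding Z_def by linarith
    then show ?thesis using y by (simp add: divide_le_eq mult.commute)
  qed
  have Z1: "1 \<le> real Z" by (simp add: Z_def)
  define Q where "Q = 8 * (K0 + 1) * Z"
  have Q0: "0 < Q" by (simp add: Q_def Z_def)
  define \<kappa> where "\<kappa> = (1 / (2 * real Q)) ^ (b + 1)"
  have \<kappa>: "0 < \<kappa>" using Q0 by (simp add: \<kappa>_def)
  have ev1: "eventually (\<lambda>n. y / 2 < real (p n) / real n) sequentially"
    using order_tendstoD(1)[OF lim, of "y/2"] y by simp
  have ev2: "eventually (\<lambda>n. 2 * Q \<le> n) sequentially" by (rule eventually_ge_at_top)
  have ev3: "eventually (\<lambda>n. nat \<lceil>16 / y\<rceil> \<le> n) sequentially" by (rule eventually_ge_at_top)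
  have "eventually (\<lambda>n. \<kappa> \<le> real (card (Tdist w (p n) n)) / real n ^ (b + 1)) sequentially"
    using ev1 ev2 ev3
  proof eventually_elim
    case (elim n)
    define h where "h = n div Q"
    have n0: "0 < real n" using elim(2) Q0 by simp
    have pbig: "y * real n < 2 * real (p n)" using elim(1) n0 by (simp add: field_simps)
    have "16 / y \<le> real n" using elim(3) by linarith
    then have "16 \<le> y * real n" using y by (simp add: divide_le_eq mult.commute)
    then have p8: "8 \<le> real (p n)" using pbig by linarith
    have hb: "real Q * real h \<le> real n" "real n < real Q * (real h + 1)"
      using div_bounds[OF Q0, of n] by (simp_all add: h_def)
    have h1: "1 \<le> h"
    proof -
      have "Q \<le> n" using elim(2) by simp
      then show ?thesis unfolding h_def using Q0 by (simp add: less_eq_div_iff_mult_less_eq)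
    qed
    define Kh where "Kh = (K0 + 1) * h"
    have KhZ: "8 * real Kh * real Z \<le> real n" using hb(1) by (simp add: Kh_def Q_def algebra_simps)
    have Kh_y: "8 * real Kh \<le> y * real n"
    proof -
      have "8 * real Kh * 1 \<le> 8 * real Kh * (real Z * y)" using Zy by (intro mult_left_mono) simp_all
      also have "\<dots> \<le> real n * y" using KhZ y by (simp add: mult.assoc[symmetric] mult_right_mono)
      finally show ?thesis by (simp add: mult.commute)
    qed
    have Kh_n: "8 * real Kh \<le> real n"
    proof -
      have "8 * real Kh * 1 \<le> 8 * real Kh * real Z" using Z1 by (intro mult_left_mono) simp_all
      then show ?thesis using KhZ by simp
    qed
    have K0h: "real (K0 * h) \<le> real Kh" by (simp add: Kh_def algebra_simps)
    have pd: "real (p n) \<le> 2 * real (p n div 2) + 1" "2 * real (p n div 2) \<le> real (p n)"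
    proof -
      have a1: "p n \<le> 2 * (p n div 2) + 1" and a2: "2 * (p n div 2) \<le> p n" by linarith+
      have "real (p n) \<le> real (2 * (p n div 2) + 1)" using a1 by (simp only: of_nat_le_iff)
      then show "real (p n) \<le> 2 * real (p n div 2) + 1" by simp
      have "real (2 * (p n div 2)) \<le> real (p n)" using a2 by (simp only: of_nat_le_iff)
      then show "2 * real (p n div 2) \<le> real (p n)" by simp
    qed
    have nd: "real n \<le> 2 * real (n div 2) + 1" "2 * real (n div 2) \<le> real n"
    proof -
      have a1: "n \<le> 2 * (n div 2) + 1" and a2: "2 * (n div 2) \<le> n" by linarith+
      have "real n \<le> real (2 * (n div 2) + 1)" using a1 by (simp only: of_nat_le_iff)
      then show "real n \<le> 2 * real (n div 2) + 1" by simp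
      have "real (2 * (n div 2)) \<le> real n" using a2 by (simp only: of_nat_le_iff)
      then show "2 * real (n div 2) \<le> real n" by simp
    qed
    have n16: "16 \<le> real n" using elim(2) Q0 unfolding Q_def Z_def by simp
    have c1: "K0 * h + 1 \<le> p n div 2"
    proof -
      have "real (K0 * h) + 1 \<le> real (p n div 2)" using K0h Kh_y pbig pd p8 by linarith
      then show ?thesis by linarith
    qed
    have c2: "p n div 2 + h + K0 * h \<le> p n"
    proof -
      have "real (p n div 2) + real Kh \<le> real (p n)" using Kh_y pbig pd by linarith
      moreover have "real (h + K0 * h) = real Kh" by (simp add: Kh_def algebra_simps)
      ultimately have "real (p n div 2 + h + K0 * h) \<le> real (p n)" by simp
      then show ?thesis by linarith
    qed
    have c3: "K0 * h + 1 \<le> n div 2"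
    proof -
      have "real (K0 * h) + 1 \<le> real (n div 2)" using K0h Kh_n nd n16 by linarith
      then show ?thesis by linarith
    qed
    have c4: "n div 2 + h + K0 * h \<le> n"
    proof -
      have "real (n div 2) + real Kh \<le> real n" using Kh_n nd by linarith
      moreover have "real (h + K0 * h) = real Kh" by (simp add: Kh_def algebra_simps)
      ultimately have "real (n div 2 + h + K0 * h) \<le> real n" by simp
      then show ?thesis by linarith
    qed
    have K0e: "2 * int (length w) * int (card (set w)) * int h = int (K0 * h)" by (simp add: K0_def L_def b_def)
    have box: "h ^ (b + 1) \<le> card (Tdist w (p n) n)"
      unfolding b_def
    proof (rule box_in_Tdist[of w h "int (p n div 2)" "p n" "int (n div 2)" n])
      show "is_word w" by (rule w)
      show "\<forall>a<card (set w). ecoef w a = 0" by (rule sym)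
      show "1 \<le> h" by (rule h1)
      show "2 * int (length w) * int (card (set w)) * int h + 1 \<le> int (p n div 2)"
        unfolding K0e using c1 by linarith
      show "int (p n div 2) + int h + 2 * int (length w) * int (card (set w)) * int h \<le> int (p n)"
        unfolding K0e using c2 by linarith
      show "2 * int (length w) * int (card (set w)) * int h + 1 \<le> int (n div 2)"
        unfolding K0e using c3 by linarith
      show "int (n div 2) + int h + 2 * int (length w) * int (card (set w)) * int h \<le> int n"
        unfolding K0e using c4 by linarith
    qed
    have hn: "1 / (2 * real Q) \<le> real h / real n"
    proof -
      have "real n \<le> real Q * real h + real Q" using hb(2) by (simp add: algebra_simps)
      moreover have "2 * real Q \<le> real n" using elim(2) by linarith
      ultimately have "real n \<le> 2 * real Q * real h" by linarith
      then show ?thesis using n0 Q0 by (simp add: field_simps)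
    qed
    have "\<kappa> \<le> (real h / real n) ^ (b + 1)" unfolding \<kappa>_def
      by (rule power_mono[OF hn]) (simp add: Q0)
    also have "\<dots> = real (h ^ (b + 1)) / real n ^ (b + 1)" by (simp add: power_divide)
    also have "\<dots> \<le> real (card (Tdist w (p n) n)) / real n ^ (b + 1)"
    proof (rule divide_right_mono)
      show "real (h ^ (b + 1)) \<le> real (card (Tdist w (p n) n))" using box by (simp only: of_nat_le_iff)
    qed simp
    finally show ?case .
  qed
  then show ?thesis using \<kappa> unfolding b_def by blast
qed


lemma Tdist_sub_Tset: "Tdist w p n \<subseteq> Tset w p n"
  by (auto simp: Tdist_def)

lemma nat_box_real: "real (nat (2 * int (p + n) + 1)) = 2 * real p + 2 * real n + 1"
  by simp

lemma f_limit:
  assumes w: "is_word w" and lim: "(\<lambda>n. real (p n) / real n) \<longlonglongrightarrow> y" and y: "0 < y"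
  shows "\<exists>Lf. (\<lambda>n. real (card (Tdist w (p n) n)) / real n ^ (card (set w) + 1)) \<longlonglongrightarrow> Lf
            \<and> (symmetric_word w \<longrightarrow> Lf > 0) \<and> (\<not> symmetric_word w \<longrightarrow> Lf = 0)"
proof -
  define b where "b = card (set w)"
  define f where "f n = real (card (Tdist w (p n) n)) / real n ^ (b + 1)" for n
  define G where "G n = (2 * real (p n) + 2 * real n + 1) ^ b / real n ^ (b + 1)" for n
  have G0: "G \<longlonglongrightarrow> 0" unfolding G_def by (rule poly_over_n[OF lim])
  have f0: "0 \<le> f n" for n by (simp add: f_def)
  have fT: "f n \<le> real (card (Tset w (p n) n)) / real n ^ (b + 1)" for n
  proof -
    have "card (Tdist w (p n) n) \<le> card (Tset w (p n) n)"
      by (rule card_mono[OF Tset_finite[OF w] Tdist_sub_Tset])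
    then show ?thesis unfolding f_def by (intro divide_right_mono) simp_all
  qed
  show ?thesis
  proof (cases "symmetric_word w")
    case True
    then have sym: "\<forall>a<card (set w). ecoef w a = 0" using symmetric_iff_ecoef[OF w] by simp
    obtain Lt where Lt: "(\<lambda>n. real (card (Tset w (p n) n)) / real n ^ (b + 1)) \<longlonglongrightarrow> Lt"
      using sym_conv[OF w sym lim] unfolding convergent_def b_def by blast
    have low: "real (card (Tset w (p n) n)) / real n ^ (b + 1) - real (b * b) * G n \<le> f n" for n
    proof -
      have "card (Tset w (p n) n) \<le> card (Tdist w (p n) n) + b * b * nat (2 * int (p n + n) + 1) ^ b"
        using dist_gap[OF w] by (simp add: b_def)
      then have "real (card (Tset w (p n) n)) \<le> real (card (Tdist w (p n) n)) + real (b * b) * (2 * real (p n) + 2 * real n + 1) ^ b"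
        by (metis nat_box_real of_nat_add of_nat_le_iff of_nat_mult of_nat_power)
      then have "real (card (Tset w (p n) n)) / real n ^ (b + 1) \<le> (real (card (Tdist w (p n) n)) + real (b * b) * (2 * real (p n) + 2 * real n + 1) ^ b) / real n ^ (b + 1)"
        by (intro divide_right_mono) simp_all
      also have "\<dots> = f n + real (b * b) * G n" by (simp add: f_def G_def add_divide_distrib)
      finally show ?thesis by simp
    qed
    have "(\<lambda>n. real (card (Tset w (p n) n)) / real n ^ (b + 1) - real (b * b) * G n) \<longlonglongrightarrow> Lt - real (b * b) * 0"
      by (intro tendsto_intros Lt G0)
    then have l1: "(\<lambda>n. real (card (Tset w (p n) n)) / real n ^ (b + 1) - real (b * b) * G n) \<longlonglongrightarrow> Lt" by simp
    have fl: "f \<longlonglongrightarrow> Lt"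
    proof (rule tendsto_sandwich[OF _ _ l1 Lt])
      show "eventually (\<lambda>n. real (card (Tset w (p n) n)) / real n ^ (b + 1) - real (b * b) * G n \<le> f n) sequentially"
        using low by (simp add: always_eventually)
      show "eventually (\<lambda>n. f n \<le> real (card (Tset w (p n) n)) / real n ^ (b + 1)) sequentially"
        using fT by (simp add: always_eventually)
    qed
    obtain \<kappa> where \<kappa>: "0 < \<kappa>" "eventually (\<lambda>n. \<kappa> \<le> f n) sequentially"
      using pos_lower[OF w sym lim y] unfolding f_def b_def by blast
    have "\<kappa> \<le> Lt" by (rule tendsto_lowerbound[OF fl \<kappa>(2)]) simp
    then show ?thesis using fl \<kappa>(1) True unfolding f_def b_def by auto
  next
    case False
    then obtain a0 where a0: "a0 < card (set w)" "ecoef w a0 \<noteq> 0" using symmetric_iff_ecoef[OF w] by auto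
    have up: "f n \<le> G n" for n
    proof -
      have "card (Tdist w (p n) n) \<le> card (Tset w (p n) n)"
        by (rule card_mono[OF Tset_finite[OF w] Tdist_sub_Tset])
      also have "\<dots> \<le> nat (2 * int (p n + n) + 1) ^ b" using nonsym_bound[OF w a0] by (simp add: b_def)
      finally have "real (card (Tdist w (p n) n)) \<le> (2 * real (p n) + 2 * real n + 1) ^ b"
        by (metis nat_box_real of_nat_le_iff of_nat_power)
      then show ?thesis unfolding f_def G_def by (intro divide_right_mono) simp_all
    qed
    have "f \<longlonglongrightarrow> 0"
    proof (rule tendsto_sandwich[OF _ _ tendsto_const G0])
      show "eventually (\<lambda>n. 0 \<le> f n) sequentially" using f0 by (simp add: always_eventually)
      show "eventually (\<lambda>n. f n \<le> G n) sequentially" using up by (simp add: always_eventually)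
    qed
    then show ?thesis using False unfolding f_def b_def by auto
  qed
qed

theorem lemma5p5:
  fixes p :: "nat \<Rightarrow> nat" and y :: real and w :: "nat list" and k b r :: nat
  assumes "(\<lambda>n. real (p n) / real n) \<longlonglongrightarrow> y"
    and "0 < y"
    and "is_word w"
    and "length w = 2 * k"
    and "b = card (set w)"
    and "r + 1 = even_generating w"
  shows "\<exists>l. (\<lambda>n. real (card (Pi_S L_T (p n) n k w)) / (real (p n) ^ (r + 1) * real n ^ (b - r)))
              \<longlonglongrightarrow> l
           \<and> (symmetric_word w \<longrightarrow> l > 0) \<and> (\<not> symmetric_word w \<longrightarrow> l = 0)"
proof -
  note lim = assms(1) and y = assms(2) and w = assms(3) and len = assms(4) and bdef = assms(5)
  have rb: "r \<le> b"
    using assms(6) r_le_b[of w] bdef by (simp add: even_generating_def)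
  obtain Lf where Lf: "(\<lambda>n. real (card (Tdist w (p n) n)) / real n ^ (b + 1)) \<longlonglongrightarrow> Lf"
      "symmetric_word w \<longrightarrow> Lf > 0" "\<not> symmetric_word w \<longrightarrow> Lf = 0"
    using f_limit[OF w lim y] bdef by blast
  have inv: "(\<lambda>n. real n / real (p n)) \<longlonglongrightarrow> 1 / y"
  proof -
    have "(\<lambda>n. 1 / (real (p n) / real n)) \<longlonglongrightarrow> 1 / y"
      using y by (intro tendsto_intros lim) simp
    then show ?thesis by simp
  qed
  have t: "(\<lambda>n. real (card (Tdist w (p n) n)) / real n ^ (b + 1) * (real n / real (p n)) ^ (r + 1))
            \<longlonglongrightarrow> Lf * (1 / y) ^ (r + 1)"
    by (intro tendsto_intros Lf(1) inv)
  have ev: "eventually (\<lambda>n. real (card (Tdist w (p n) n)) / real n ^ (b + 1) * (real n / real (p n)) ^ (r + 1)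
      = real (card (Pi_S L_T (p n) n k w)) / (real (p n) ^ (r + 1) * real n ^ (b - r))) sequentially"
  proof -
    have "eventually (\<lambda>n. y / 2 < real (p n) / real n) sequentially"
      using order_tendstoD(1)[OF lim, of "y/2"] y by simp
    then show ?thesis using eventually_gt_at_top[of 0]
    proof eventually_elim
      case (elim n)
      have n0: "0 < real n" using elim(2) by simp
      have p0: "0 < real (p n)"
      proof -
        have "0 < real (p n) / real n" using elim(1) y by linarith
        then show ?thesis using n0 by (simp add: zero_less_divide_iff)
      qed
      have nb: "real n ^ (b + 1) = real n ^ (r + 1) * real n ^ (b - r)"
        using rb by (simp add: power_add[symmetric])
      show ?case
        unfolding card_Pi_S[OF w len] nb using n0 p0
        by (simp add: power_divide field_simps)
    qed
  qed
  have "(\<lambda>n. real (card (Pi_S L_T (p n) n k w)) / (real (p n) ^ (r + 1) * real n ^ (b - r)))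
        \<longlonglongrightarrow> Lf * (1 / y) ^ (r + 1)"
    by (rule Lim_transform_eventually[OF t ev])
  moreover have "symmetric_word w \<longrightarrow> Lf * (1 / y) ^ (r + 1) > 0" using Lf(2) y by simp
  moreover have "\<not> symmetric_word w \<longrightarrow> Lf * (1 / y) ^ (r + 1) = 0" using Lf(3) by simp
  ultimately show ?thesis by blast
qed

end
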